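(* Let $G$ be an inner semi-Eulerian plane graph whose outer subgraph is a simple cycle, and let $G'$ be the inner subgraph of $G$ (with the coloring inherited from $G$). Then \[|\mathcal{B}(G)|=2\,|\mathcal{C}_B(G')|.\]
   Context: A plane graph is a finite planar graph with a fixed embedding in the plane. The external face is the unbounded face; all other faces are internal. A vertex is external if it lies on the boundary of the external face, and internal otherwise. A bipartite plane graph (vertices colored black and white) is inner semi-Eulerian if every internal black vertex has even degree. Let $F$ be the set of internal faces. A subset $B\subseteq F$ is a billiard nest if: (1) for each internal black vertex $b$, listing the faces in the angular sectors around $b$ in cyclic order as $f_1,\dots,f_{2k}$, either all of them are in $B$, none are in $B$, or exactly every second one is in $B$ (i.e. exactly $f_1,f_3,\dots$ or exactly $f_2,f_4,\dots$); (2) for each external black vertex $b$, either all internal faces incident to $b$ are in $B$ or none are. $\mathcal{B}(G)$ denotes the set of billiard nests. The inner subgraph $G'$ is the subgraph induced on the internal vertices of $G$; the outer subgraph is the subgraph induced on the external vertices. A channel of a graph $H$ is a vertex set $C$ such that every vertex of $H$ is adjacent to an even number of vertices of $C$ (the empty set included); $\mathcal{C}_B(H)$ is the set of channels of the bipartite graph $H$ consisting only of black vertices. *)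

theory Defs
  imports "HOL-Combinatorics.Permutations"
begin

text \<open>
  A plane graph is encoded as a combinatorial map (rotation system):
  a finite set D of darts (half-edges), a fixed-point-free involution
  alpha (the two darts of an edge), a permutation sigma (rotation of the
  darts around their common vertex, in the cyclic order of the embedding),
  and vert d the vertex at which dart d starts.  The corner (angular sector) of the
  embedding between dart d and sigma d belongs to the face of sigma d.
  Planarity = genus 0, i.e. Euler's formula V - E + F = 2 for the connected map.
\<close>

definition orb :: "('a \<Rightarrow> 'a) \<Rightarrow> 'a \<Rightarrow> 'a set" where
  "orb f x = {(f ^^ n) x | n. True}"

definition face_of :: "('d \<Rightarrow> 'd) \<Rightarrow> ('d \<Rightarrow> 'd) \<Rightarrow> 'd \<Rightarrow> 'd set" where
  "face_of \<alpha> \<sigma> d = orb (\<sigma> \<circ> \<alpha>) d"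

definition faces :: "'d set \<Rightarrow> ('d \<Rightarrow> 'd) \<Rightarrow> ('d \<Rightarrow> 'd) \<Rightarrow> 'd set set" where
  "faces D \<alpha> \<sigma> = face_of \<alpha> \<sigma> ` D"

definition adj :: "'d set \<Rightarrow> ('d \<Rightarrow> 'd) \<Rightarrow> ('d \<Rightarrow> 'v) \<Rightarrow> 'v \<Rightarrow> 'v \<Rightarrow> bool" where
  "adj D \<alpha> vert u v \<longleftrightarrow> (\<exists>d\<in>D. vert d = u \<and> vert (\<alpha> d) = v)"

definition deg :: "'d set \<Rightarrow> ('d \<Rightarrow> 'v) \<Rightarrow> 'v \<Rightarrow> nat" where
  "deg D vert v = card {d \<in> D. vert d = v}"

definition plane_graph ::
  "'d set \<Rightarrow> ('d \<Rightarrow> 'd) \<Rightarrow> ('d \<Rightarrow> 'd) \<Rightarrow> ('d \<Rightarrow> 'v) \<Rightarrow> 'd set \<Rightarrow> bool" where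
  "plane_graph D \<alpha> \<sigma> vert out \<longleftrightarrow>
     finite D \<and> \<alpha> permutes D \<and> (\<forall>d\<in>D. \<alpha> d \<noteq> d \<and> \<alpha> (\<alpha> d) = d) \<and>
     \<sigma> permutes D \<and> (\<forall>d\<in>D. vert (\<sigma> d) = vert d) \<and>
     (\<forall>d\<in>D. \<forall>e\<in>D. vert d = vert e \<longrightarrow> (\<exists>n. (\<sigma> ^^ n) d = e)) \<and>
     \<comment> \<open>no loops, no parallel edges\<close>
     (\<forall>d\<in>D. vert (\<alpha> d) \<noteq> vert d) \<and>
     (\<forall>d\<in>D. \<forall>e\<in>D. vert d = vert e \<and> vert (\<alpha> d) = vert (\<alpha> e) \<longrightarrow> d = e) \<and>
     \<comment> \<open>connected\<close>
     (\<forall>u\<in>vert ` D. \<forall>v\<in>vert ` D. (u, v) \<in> {(x, y). adj D \<alpha> vert x y}\<^sup>*) \<and>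
     \<comment> \<open>genus 0: Euler's formula\<close>
     int (card (vert ` D)) - int (card D div 2) + int (card (faces D \<alpha> \<sigma>)) = 2 \<and>
     out \<in> faces D \<alpha> \<sigma>"

definition proper_coloring :: "'d set \<Rightarrow> ('d \<Rightarrow> 'd) \<Rightarrow> ('d \<Rightarrow> 'v) \<Rightarrow> ('v \<Rightarrow> bool) \<Rightarrow> bool" where
  "proper_coloring D \<alpha> vert black \<longleftrightarrow> (\<forall>d\<in>D. black (vert d) \<noteq> black (vert (\<alpha> d)))"

definition external :: "'d set \<Rightarrow> ('d \<Rightarrow> 'd) \<Rightarrow> ('d \<Rightarrow> 'd) \<Rightarrow> ('d \<Rightarrow> 'v) \<Rightarrow> 'd set \<Rightarrow> 'v set" where
  "external D \<alpha> \<sigma> vert out = {v. \<exists>d\<in>D. vert d = v \<and> face_of \<alpha> \<sigma> d = out}"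

definition internal :: "'d set \<Rightarrow> ('d \<Rightarrow> 'd) \<Rightarrow> ('d \<Rightarrow> 'd) \<Rightarrow> ('d \<Rightarrow> 'v) \<Rightarrow> 'd set \<Rightarrow> 'v set" where
  "internal D \<alpha> \<sigma> vert out = vert ` D - external D \<alpha> \<sigma> vert out"

definition inner_semi_eulerian ::
  "'d set \<Rightarrow> ('d \<Rightarrow> 'd) \<Rightarrow> ('d \<Rightarrow> 'd) \<Rightarrow> ('d \<Rightarrow> 'v) \<Rightarrow> ('v \<Rightarrow> bool) \<Rightarrow> 'd set \<Rightarrow> bool" where
  "inner_semi_eulerian D \<alpha> \<sigma> vert black out \<longleftrightarrow>
     (\<forall>v\<in>internal D \<alpha> \<sigma> vert out. black v \<longrightarrow> even (deg D vert v))"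

definition outer_is_cycle ::
  "'d set \<Rightarrow> ('d \<Rightarrow> 'd) \<Rightarrow> ('d \<Rightarrow> 'd) \<Rightarrow> ('d \<Rightarrow> 'v) \<Rightarrow> 'd set \<Rightarrow> bool" where
  "outer_is_cycle D \<alpha> \<sigma> vert out \<longleftrightarrow>
     (\<exists>n c. 3 \<le> n \<and> bij_betw c {..<n} (external D \<alpha> \<sigma> vert out) \<and>
        (\<forall>u\<in>external D \<alpha> \<sigma> vert out. \<forall>v\<in>external D \<alpha> \<sigma> vert out.
           adj D \<alpha> vert u v \<longleftrightarrow>
           (\<exists>i<n. (u = c i \<and> v = c (Suc i mod n)) \<or> (v = c i \<and> u = c (Suc i mod n)))))"

text \<open>Billiard nests.  Around a vertex b, starting from a dart d at b, the faces
  in the angular sectors in cyclic order are face_of ((sigma^^i) d), i < deg b.\<close>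
definition billiard_nests ::
  "'d set \<Rightarrow> ('d \<Rightarrow> 'd) \<Rightarrow> ('d \<Rightarrow> 'd) \<Rightarrow> ('d \<Rightarrow> 'v) \<Rightarrow> ('v \<Rightarrow> bool) \<Rightarrow> 'd set \<Rightarrow> 'd set set set" where
  "billiard_nests D \<alpha> \<sigma> vert black out =
     {B. B \<subseteq> faces D \<alpha> \<sigma> - {out} \<and>
        (\<forall>b\<in>internal D \<alpha> \<sigma> vert out. black b \<longrightarrow>
           (\<forall>d\<in>D. vert d = b \<longrightarrow>
              (\<forall>i<deg D vert b. face_of \<alpha> \<sigma> ((\<sigma> ^^ i) d) \<in> B) \<or>
              (\<forall>i<deg D vert b. face_of \<alpha> \<sigma> ((\<sigma> ^^ i) d) \<notin> B) \<or>
              (\<forall>i<deg D vert b. face_of \<alpha> \<sigma> ((\<sigma> ^^ i) d) \<in> B \<longleftrightarrow> even i) \<or>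
              (\<forall>i<deg D vert b. face_of \<alpha> \<sigma> ((\<sigma> ^^ i) d) \<in> B \<longleftrightarrow> odd i))) \<and>
        (\<forall>b\<in>external D \<alpha> \<sigma> vert out. black b \<longrightarrow>
           (let I = {face_of \<alpha> \<sigma> d | d. d \<in> D \<and> vert d = b} - {out}
            in I \<subseteq> B \<or> I \<inter> B = {}))}"

definition inner_black_channels ::
  "'d set \<Rightarrow> ('d \<Rightarrow> 'd) \<Rightarrow> ('d \<Rightarrow> 'd) \<Rightarrow> ('d \<Rightarrow> 'v) \<Rightarrow> ('v \<Rightarrow> bool) \<Rightarrow> 'd set \<Rightarrow> 'v set set" where
  "inner_black_channels D \<alpha> \<sigma> vert black out =
     {C. C \<subseteq> {v \<in> internal D \<alpha> \<sigma> vert out. black v} \<and>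
        (\<forall>v\<in>internal D \<alpha> \<sigma> vert out. even (card {u \<in> C. adj D \<alpha> vert v u}))}"

end

theory Submission
  imports Defs "HOL-Combinatorics.Orbits"
begin


definition sd :: "'a set \<Rightarrow> 'a set \<Rightarrow> 'a set" where
  "sd A B = (A - B) \<union> (B - A)"

lemma parity_xor:
  assumes "finite S"
  shows "odd (card {x\<in>S. P x \<noteq> Q x}) \<longleftrightarrow> (odd (card {x\<in>S. P x}) \<noteq> odd (card {x\<in>S. Q x}))"
proof -
  have a: "card {x\<in>S. P x} = card {x\<in>S. P x \<and> \<not> Q x} + card {x\<in>S. P x \<and> Q x}"
  proof -
    have "{x\<in>S. P x} = {x\<in>S. P x \<and> \<not> Q x} \<union> {x\<in>S. P x \<and> Q x}" by blast
    then show ?thesis using assms by (simp add: card_Un_disjoint[symmetric] disjoint_iff)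
  qed
  have b: "card {x\<in>S. Q x} = card {x\<in>S. Q x \<and> \<not> P x} + card {x\<in>S. P x \<and> Q x}"
  proof -
    have "{x\<in>S. Q x} = {x\<in>S. Q x \<and> \<not> P x} \<union> {x\<in>S. P x \<and> Q x}" by blast
    then show ?thesis using assms by (simp add: card_Un_disjoint[symmetric] disjoint_iff)
  qed
  have c: "card {x\<in>S. P x \<noteq> Q x} = card {x\<in>S. P x \<and> \<not> Q x} + card {x\<in>S. Q x \<and> \<not> P x}"
  proof -
    have "{x\<in>S. P x \<noteq> Q x} = {x\<in>S. P x \<and> \<not> Q x} \<union> {x\<in>S. Q x \<and> \<not> P x}" by blast
    then show ?thesis using assms by (simp add: card_Un_disjoint[symmetric] disjoint_iff)
  qed
  show ?thesis unfolding a b c by presburger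
qed

lemma even_perm_changes:
  fixes P :: "'a \<Rightarrow> bool"
  assumes "finite S" "bij_betw f S S"
  shows "even (card {x\<in>S. P x \<noteq> P (f x)})"
proof -
  have e: "card {x\<in>S. P (f x)} = card {x\<in>S. P x}"
  proof -
    have "bij_betw f {x\<in>S. P (f x)} {x\<in>S. P x}"
      using assms(2) unfolding bij_betw_def inj_on_def by (auto simp: image_iff)
    then show ?thesis by (rule bij_betw_same_card)
  qed
  show ?thesis using parity_xor[OF assms(1), of P "\<lambda>x. P (f x)"] e by simp
qed

lemma hom_count:
  assumes "finite A"
    and hom: "\<And>X Y. X \<subseteq> A \<Longrightarrow> Y \<subseteq> A \<Longrightarrow> f (sd X Y) = sd (f X) (f Y)"
  shows "card (f ` Pow A) * card {X\<in>Pow A. f X = {}} = 2 ^ card A"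
proof -
  let ?K = "{X\<in>Pow A. f X = {}}"
  have sdA: "sd X Y \<subseteq> A" if "X \<subseteq> A" "Y \<subseteq> A" for X Y using that unfolding sd_def by blast
  have sdsd: "sd X (sd X Y) = Y" for X Y :: "'a set" unfolding sd_def by blast
  have sdself: "sd X X = {}" for X :: "'b set" unfolding sd_def by blast
  have sdnil: "sd X Y = {} \<longleftrightarrow> X = Y" for X Y :: "'b set" unfolding sd_def by blast
  have fib: "card {X\<in>Pow A. f X = f X0} = card ?K" if X0: "X0 \<subseteq> A" for X0
  proof -
    have "{X\<in>Pow A. f X = f X0} = (\<lambda>K. sd X0 K) ` ?K"
    proof (intro set_eqI iffI)
      fix X assume X: "X \<in> {X\<in>Pow A. f X = f X0}"
      then have XA: "X \<subseteq> A" by simp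
      have "f (sd X0 X) = {}" using hom[OF X0 XA] X by (simp add: sdself)
      then have "sd X0 X \<in> ?K" using sdA[OF X0 XA] by simp
      moreover have "X = sd X0 (sd X0 X)" by (simp add: sdsd)
      ultimately show "X \<in> (\<lambda>K. sd X0 K) ` ?K" by (rule rev_image_eqI)
    next
      fix X assume "X \<in> (\<lambda>K. sd X0 K) ` ?K"
      then obtain K where K: "K \<subseteq> A" "f K = {}" "X = sd X0 K" by auto
      have "f X = sd (f X0) {}" using hom[OF X0 K(1)] K by simp
      then have "f X = f X0" unfolding sd_def by simp
      then show "X \<in> {X\<in>Pow A. f X = f X0}" using sdA[OF X0 K(1)] K(3) by simp
    qed
    moreover have "inj_on (\<lambda>K. sd X0 K) ?K"
    proof (rule inj_onI)
      fix x y assume "sd X0 x = sd X0 y"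
      then have "sd X0 (sd X0 x) = sd X0 (sd X0 y)" by simp
      then show "x = y" by (simp add: sdsd)
    qed
    ultimately show ?thesis by (simp add: card_image)
  qed
  have U: "Pow A = (\<Union>y\<in>f ` Pow A. {X\<in>Pow A. f X = y})" by blast
  have "card (Pow A) = (\<Sum>y\<in>f ` Pow A. card {X\<in>Pow A. f X = y})"
    by (subst U, rule card_UN_disjoint) (use assms(1) in auto)
  also have "\<dots> = (\<Sum>y\<in>f ` Pow A. card ?K)"
  proof (rule sum.cong[OF refl])
    fix y assume "y \<in> f ` Pow A"
    then obtain X0 where X0: "X0 \<subseteq> A" "y = f X0" by auto
    show "card {X\<in>Pow A. f X = y} = card ?K" using fib[OF X0(1)] X0(2) by simp
  qed
  finally show ?thesis using assms(1) by (simp add: card_Pow)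
qed

lemma even_subsets_card:
  assumes "finite V" "v0 \<in> V"
  shows "card {S. S \<subseteq> V \<and> even (card S)} = 2 ^ (card V - 1)"
proof -
  let ?g = "\<lambda>T. if even (card T) then T else insert v0 T"
  have "bij_betw (\<lambda>S. S - {v0}) {S. S \<subseteq> V \<and> even (card S)} (Pow (V - {v0}))"
  proof (rule bij_betw_byWitness[where f'="?g"])
    show "\<forall>a\<in>{S. S \<subseteq> V \<and> even (card S)}. ?g (a - {v0}) = a"
    proof
      fix a assume a: "a \<in> {S. S \<subseteq> V \<and> even (card S)}"
      then have fa: "finite a" and ev: "even (card a)" using assms(1) finite_subset by auto
      show "?g (a - {v0}) = a"
      proof (cases "v0 \<in> a")
        case True
        then have "card (a - {v0}) = card a - 1" using fa by simp
        moreover have "card a > 0" using True fa card_gt_0_iff by blast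
        ultimately have "odd (card (a - {v0}))" using ev by simp
        then show ?thesis using True by (simp add: insert_absorb)
      next
        case False
        then have "a - {v0} = a" by simp
        then show ?thesis using ev by simp
      qed
    qed
    show "\<forall>a'\<in>Pow (V - {v0}). ?g a' - {v0} = a'" by auto
    show "(\<lambda>S. S - {v0}) ` {S. S \<subseteq> V \<and> even (card S)} \<subseteq> Pow (V - {v0})" by auto
    show "?g ` Pow (V - {v0}) \<subseteq> {S. S \<subseteq> V \<and> even (card S)}"
    proof
      fix x assume "x \<in> ?g ` Pow (V - {v0})"
      then obtain T where T: "T \<subseteq> V - {v0}" "x = ?g T" by auto
      have fT: "finite T" using T(1) assms(1) finite_subset by blast
      have nv: "v0 \<notin> T" using T by auto
      show "x \<in> {S. S \<subseteq> V \<and> even (card S)}"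
      proof (cases "even (card T)")
        case True then show ?thesis using T by auto
      next
        case False
        then have "x = insert v0 T" using T by simp
        moreover have "card (insert v0 T) = Suc (card T)" using fT nv by simp
        ultimately show ?thesis using T assms(2) False by auto
      qed
    qed
  qed
  then have "card {S. S \<subseteq> V \<and> even (card S)} = card (Pow (V - {v0}))" by (rule bij_betw_same_card)
  also have "\<dots> = 2 ^ (card V - 1)" using assms by (simp add: card_Pow)
  finally show ?thesis .
qed




locale pg =
  fixes D :: "'d set" and \<alpha> \<sigma> :: "'d \<Rightarrow> 'd" and vert :: "'d \<Rightarrow> 'v"
    and black :: "'v \<Rightarrow> bool" and out :: "'d set"
  assumes PG: "plane_graph D \<alpha> \<sigma> vert out"
    and COL: "proper_coloring D \<alpha> vert black"
    and ISE: "inner_semi_eulerian D \<alpha> \<sigma> vert black out"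
    and CYC: "outer_is_cycle D \<alpha> \<sigma> vert out"
begin

abbreviation "fc \<equiv> face_of \<alpha> \<sigma>"
abbreviation "\<Phi> \<equiv> faces D \<alpha> \<sigma>"
abbreviation "Ext \<equiv> external D \<alpha> \<sigma> vert out"
abbreviation "Inn \<equiv> internal D \<alpha> \<sigma> vert out"
abbreviation "\<tau> \<equiv> \<sigma> \<circ> \<alpha>"

lemma finD: "finite D" using PG unfolding plane_graph_def by blast
lemma aperm: "\<alpha> permutes D" using PG unfolding plane_graph_def by blast
lemma sperm: "\<sigma> permutes D" using PG unfolding plane_graph_def by blast
lemma ainv: "d \<in> D \<Longrightarrow> \<alpha> d \<noteq> d" "\<alpha> (\<alpha> d) = d"
proof -
  show "d \<in> D \<Longrightarrow> \<alpha> d \<noteq> d" using PG unfolding plane_graph_def by blast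
  show "\<alpha> (\<alpha> d) = d"
  proof (cases "d \<in> D")
    case True then show ?thesis using PG unfolding plane_graph_def by blast
  next
    case False then show ?thesis using aperm by (simp add: permutes_not_in)
  qed
qed
lemma svert: "d \<in> D \<Longrightarrow> vert (\<sigma> d) = vert d" using PG unfolding plane_graph_def by blast
lemma strans: "d \<in> D \<Longrightarrow> e \<in> D \<Longrightarrow> vert d = vert e \<Longrightarrow> \<exists>n. (\<sigma> ^^ n) d = e"
  using PG unfolding plane_graph_def by blast
lemma noloop: "d \<in> D \<Longrightarrow> vert (\<alpha> d) \<noteq> vert d" using PG unfolding plane_graph_def by blast
lemma simple: "d \<in> D \<Longrightarrow> e \<in> D \<Longrightarrow> vert d = vert e \<Longrightarrow> vert (\<alpha> d) = vert (\<alpha> e) \<Longrightarrow> d = e"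
  using PG unfolding plane_graph_def by blast
lemma conn: "u \<in> vert ` D \<Longrightarrow> v \<in> vert ` D \<Longrightarrow> (u, v) \<in> {(x, y). adj D \<alpha> vert x y}\<^sup>*"
  using PG unfolding plane_graph_def by blast
lemma euler: "int (card (vert ` D)) - int (card D div 2) + int (card \<Phi>) = 2"
  using PG unfolding plane_graph_def by blast
lemma outF: "out \<in> \<Phi>" using PG unfolding plane_graph_def by blast

lemma aD: "d \<in> D \<Longrightarrow> \<alpha> d \<in> D" using aperm by (simp add: permutes_in_image)
lemma sD: "d \<in> D \<Longrightarrow> \<sigma> d \<in> D" using sperm by (simp add: permutes_in_image)
lemma snD: "d \<in> D \<Longrightarrow> (\<sigma> ^^ n) d \<in> D" by (induct n) (auto simp: sD)
lemma snvert: "d \<in> D \<Longrightarrow> vert ((\<sigma> ^^ n) d) = vert d" by (induct n) (auto simp: svert snD)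
lemma tperm: "\<tau> permutes D" using aperm sperm by (rule permutes_compose)
lemma tpermutation: "permutation \<tau>" using permutes_imp_permutation[OF finD tperm] .
lemma spermutation: "permutation \<sigma>" using permutes_imp_permutation[OF finD sperm] .

lemma fc_orbit: "fc d = orbit \<tau> d"
  unfolding face_of_def orb_def using orbit_altdef_permutation[OF tpermutation] by simp

lemma fc_tau: "fc (\<sigma> (\<alpha> d)) = fc d"
  using permutation_orbit_step[OF tpermutation, of d] by (simp add: fc_orbit)

lemma fc_sigma: "fc (\<sigma> x) = fc (\<alpha> x)"
  using fc_tau[of "\<alpha> x"] by (simp add: ainv(2))

lemma fc_self: "d \<in> fc d"
  unfolding fc_orbit using permutation_self_in_orbit[OF tpermutation] .

lemma fc_mem: "x \<in> fc d \<Longrightarrow> fc x = fc d"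
  unfolding fc_orbit using orbit_cyclic_eq3[OF cyclic_on_orbit'[OF tpermutation]] by blast

lemma fc_sub: "d \<in> D \<Longrightarrow> fc d \<subseteq> D"
proof
  fix x assume "d \<in> D" "x \<in> fc d"
  then obtain n where "x = (\<tau> ^^ n) d" unfolding face_of_def orb_def by auto
  moreover have "(\<tau> ^^ n) d \<in> D" using \<open>d \<in> D\<close>
    by (induct n) (auto simp: aD sD)
  ultimately show "x \<in> D" by simp
qed

lemma fc_in: "d \<in> D \<Longrightarrow> fc d \<in> \<Phi>" unfolding faces_def by simp
lemma finPhi: "finite \<Phi>" unfolding faces_def using finD by simp

lemma fc_eq_iff: "x \<in> fc d \<longleftrightarrow> fc x = fc d"
  using fc_mem fc_self by metis

lemma deg_orbit:
  assumes d: "d \<in> D"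
  defines "k \<equiv> deg D vert (vert d)"
  shows "(\<sigma> ^^ k) d = d" "0 < k"
    and "\<And>e. e \<in> D \<Longrightarrow> vert e = vert d \<Longrightarrow> \<exists>i<k. e = (\<sigma> ^^ i) d"
    and "\<And>i j. i < k \<Longrightarrow> j < k \<Longrightarrow> (\<sigma> ^^ i) d = (\<sigma> ^^ j) d \<Longrightarrow> i = j"
proof -
  let ?S = "{e\<in>D. vert e = vert d}"
  have S: "?S = orbit \<sigma> d"
  proof
    show "?S \<subseteq> orbit \<sigma> d"
    proof
      fix e assume "e \<in> ?S"
      then have "e \<in> D" "vert d = vert e" by auto
      then obtain n where "(\<sigma> ^^ n) d = e" using strans[OF d] by blast
      then show "e \<in> orbit \<sigma> d" unfolding orbit_altdef_permutation[OF spermutation] by blast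
    qed
    show "orbit \<sigma> d \<subseteq> ?S"
      unfolding orbit_altdef_permutation[OF spermutation] using d snD snvert by blast
  qed
  have self: "d \<in> orbit \<sigma> d" by (rule permutation_self_in_orbit[OF spermutation])
  let ?m = "funpow_dist1 \<sigma> d d"
  have O: "orbit \<sigma> d = (\<lambda>n. (\<sigma> ^^ n) d) ` {0..<?m}" by (rule orbit_conv_funpow_dist1[OF self])
  have I: "inj_on (\<lambda>n. (\<sigma> ^^ n) d) {0..<?m}" by (rule inj_on_funpow_dist1[OF self])
  have km: "k = ?m" unfolding k_def deg_def S O using I by (simp add: card_image)
  show "(\<sigma> ^^ k) d = d" unfolding km by (rule funpow_dist1_prop[OF self])
  show "0 < k" unfolding km by simp
  show "\<exists>i<k. e = (\<sigma> ^^ i) d" if "e \<in> D" "vert e = vert d" for e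
  proof -
    have "e \<in> orbit \<sigma> d" using that S by blast
    then show ?thesis unfolding O km by auto
  qed
  show "i = j" if "i < k" "j < k" "(\<sigma> ^^ i) d = (\<sigma> ^^ j) d" for i j
    using I that unfolding km inj_on_def by auto
qed

end



context pg begin

definition E :: "'d set set" where "E = {{d, \<alpha> d} | d. d \<in> D}"
definition cut :: "'d set set \<Rightarrow> 'd set set" where
  "cut Z = {e \<in> E. odd (card {x \<in> e. fc x \<in> Z})}"
definition oddv :: "'d set set \<Rightarrow> 'v set" where
  "oddv Y = {v. odd (card {d \<in> D. vert d = v \<and> {d, \<alpha> d} \<in> Y})}"

lemma finE: "finite E" unfolding E_def using finD by simp

lemma edge_eq: "{x, \<alpha> x} = {d, \<alpha> d} \<longleftrightarrow> x = d \<or> x = \<alpha> d"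
proof
  assume h: "{x, \<alpha> x} = {d, \<alpha> d}"
  show "x = d \<or> x = \<alpha> d" using h by blast
next
  assume "x = d \<or> x = \<alpha> d"
  then show "{x, \<alpha> x} = {d, \<alpha> d}" by (elim disjE) (simp_all add: ainv(2) insert_commute)
qed

lemma edge_in_E: "d \<in> D \<Longrightarrow> {d, \<alpha> d} \<in> E" unfolding E_def by blast

lemma E_cases: "e \<in> E \<Longrightarrow> (\<And>d. d \<in> D \<Longrightarrow> e = {d, \<alpha> d} \<Longrightarrow> P) \<Longrightarrow> P"
  unfolding E_def by blast

lemma card_two_filter:
  assumes "a \<noteq> b"
  shows "odd (card {x \<in> {a, b}. P x}) \<longleftrightarrow> P a \<noteq> P b"
proof (cases "P a"; cases "P b")
  assume "P a" "P b"
  have h: "{x \<in> {a, b}. P x} = {a, b}" using assms \<open>P a\<close> \<open>P b\<close> by auto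
  show ?thesis unfolding h using assms assms \<open>P a\<close> \<open>P b\<close> by simp
next
  assume "P a" "\<not> P b"
  have h: "{x \<in> {a, b}. P x} = {a}" using \<open>P a\<close> \<open>\<not> P b\<close> by auto
  show ?thesis unfolding h using assms \<open>P a\<close> \<open>\<not> P b\<close> by simp
next
  assume "\<not> P a" "P b"
  have h: "{x \<in> {a, b}. P x} = {b}" using \<open>\<not> P a\<close> \<open>P b\<close> by auto
  show ?thesis unfolding h using assms \<open>\<not> P a\<close> \<open>P b\<close> by simp
next
  assume "\<not> P a" "\<not> P b"
  have h: "{x \<in> {a, b}. P x} = {}" using \<open>\<not> P a\<close> \<open>\<not> P b\<close> by auto
  show ?thesis unfolding h using assms \<open>\<not> P a\<close> \<open>\<not> P b\<close> by simp
qed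

lemma cut_edge: "d \<in> D \<Longrightarrow> {d, \<alpha> d} \<in> cut Z \<longleftrightarrow> (fc d \<in> Z) \<noteq> (fc (\<alpha> d) \<in> Z)"
  unfolding cut_def using edge_in_E card_two_filter[OF ainv(1)[symmetric], of d "\<lambda>x. fc x \<in> Z"]
  by (simp add: ainv(1) eq_commute)

lemma cut_sub: "cut Z \<subseteq> E" unfolding cut_def by blast

lemma cut_hom: "cut (sd Z1 Z2) = sd (cut Z1) (cut Z2)"
proof -
  have "odd (card {x \<in> e. fc x \<in> sd Z1 Z2}) \<longleftrightarrow>
        (odd (card {x \<in> e. fc x \<in> Z1}) \<noteq> odd (card {x \<in> e. fc x \<in> Z2}))" if "e \<in> E" for e
  proof -
    have fe: "finite e" using that unfolding E_def by auto
    have "{x \<in> e. fc x \<in> sd Z1 Z2} = {x \<in> e. (fc x \<in> Z1) \<noteq> (fc x \<in> Z2)}"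
      unfolding sd_def by blast
    then show ?thesis using parity_xor[OF fe] by simp
  qed
  note key = this
  have "e \<in> cut (sd Z1 Z2) \<longleftrightarrow> e \<in> sd (cut Z1) (cut Z2)" for e
  proof (cases "e \<in> E")
    case True
    show ?thesis using key[OF True] True unfolding cut_def sd_def by auto
  next
    case False then show ?thesis unfolding cut_def sd_def by auto
  qed
  then show ?thesis by blast
qed

lemma oddv_hom: "oddv (sd Y1 Y2) = sd (oddv Y1) (oddv Y2)"
proof -
  have "odd (card {d \<in> D. vert d = v \<and> {d, \<alpha> d} \<in> sd Y1 Y2}) \<longleftrightarrow>
        (odd (card {d \<in> D. vert d = v \<and> {d, \<alpha> d} \<in> Y1}) \<noteq> odd (card {d \<in> D. vert d = v \<and> {d, \<alpha> d} \<in> Y2}))" for v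
  proof -
    let ?S = "{d \<in> D. vert d = v}"
    have fS: "finite ?S" using finD by simp
    have 1: "{d \<in> D. vert d = v \<and> {d, \<alpha> d} \<in> sd Y1 Y2} = {d \<in> ?S. ({d, \<alpha> d} \<in> Y1) \<noteq> ({d, \<alpha> d} \<in> Y2)}"
      unfolding sd_def by blast
    have 2: "{d \<in> D. vert d = v \<and> {d, \<alpha> d} \<in> Y1} = {d \<in> ?S. {d, \<alpha> d} \<in> Y1}" by blast
    have 3: "{d \<in> D. vert d = v \<and> {d, \<alpha> d} \<in> Y2} = {d \<in> ?S. {d, \<alpha> d} \<in> Y2}" by blast
    show ?thesis unfolding 1 2 3 by (rule parity_xor[OF fS])
  qed
  note key = this
  have "v \<in> oddv (sd Y1 Y2) \<longleftrightarrow> v \<in> sd (oddv Y1) (oddv Y2)" for v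
    using key[of v] unfolding oddv_def sd_def by auto
  then show ?thesis by blast
qed

lemma oddv_sub: "oddv Y \<subseteq> vert ` D"
proof
  fix v assume v: "v \<in> oddv Y"
  show "v \<in> vert ` D"
  proof (rule ccontr)
    assume "v \<notin> vert ` D"
    then have h: "{d \<in> D. vert d = v \<and> {d, \<alpha> d} \<in> Y} = {}" by blast
    have "odd (card {d \<in> D. vert d = v \<and> {d, \<alpha> d} \<in> Y})" using v unfolding oddv_def by simp
    then show False unfolding h by simp
  qed
qed

lemma oddv_empty: "oddv {} = {}" unfolding oddv_def by simp

lemma oddv_single:
  assumes d: "d \<in> D"
  shows "oddv {{d, \<alpha> d}} = {vert d, vert (\<alpha> d)}"
proof -
  have nl: "vert (\<alpha> d) \<noteq> vert d" using noloop d .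
  have A: "{x \<in> D. vert x = v \<and> {x, \<alpha> x} \<in> {{d, \<alpha> d}}} = {x \<in> {d, \<alpha> d}. vert x = v}" for v
    using d aD edge_eq by auto
  show ?thesis unfolding oddv_def A
  proof (intro set_eqI iffI)
    fix v assume "v \<in> {v. odd (card {x \<in> {d, \<alpha> d}. vert x = v})}"
    then have "odd (card {x \<in> {d, \<alpha> d}. vert x = v})" by simp
    then have "(vert d = v) \<noteq> (vert (\<alpha> d) = v)" using card_two_filter[OF ainv(1)[OF d, symmetric]] by simp
    then show "v \<in> {vert d, vert (\<alpha> d)}" by auto
  next
    fix v assume "v \<in> {vert d, vert (\<alpha> d)}"
    then have "(vert d = v) \<noteq> (vert (\<alpha> d) = v)" using nl by auto
    then show "v \<in> {v. odd (card {x \<in> {d, \<alpha> d}. vert x = v})}"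
      using card_two_filter[OF ainv(1)[OF d, symmetric]] by simp
  qed
qed

lemma sigma_bij: "bij_betw \<sigma> {d \<in> D. vert d = v} {d \<in> D. vert d = v}"
proof -
  have inj: "inj \<sigma>" using sperm permutes_inj by blast
  have "\<sigma> ` {d \<in> D. vert d = v} = {d \<in> D. vert d = v}"
  proof
    show "\<sigma> ` {d \<in> D. vert d = v} \<subseteq> {d \<in> D. vert d = v}" using sD svert by auto
    show "{d \<in> D. vert d = v} \<subseteq> \<sigma> ` {d \<in> D. vert d = v}"
    proof
      fix e assume e: "e \<in> {d \<in> D. vert d = v}"
      let ?x = "inv \<sigma> e"
      have "\<sigma> ?x = e" using permutes_inverses(1)[OF sperm] by simp
      moreover have "?x \<in> D" using e permutes_in_image[OF permutes_inv[OF sperm]] by simp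
      moreover have "vert ?x = v" using e svert[OF \<open>?x \<in> D\<close>] \<open>\<sigma> ?x = e\<close> by simp
      ultimately show "e \<in> \<sigma> ` {d \<in> D. vert d = v}" by force
    qed
  qed
  moreover have "inj_on \<sigma> {d \<in> D. vert d = v}" using inj by (rule inj_on_subset) simp
  ultimately show ?thesis unfolding bij_betw_def by simp
qed

lemma oddv_cut: "oddv (cut Z) = {}"
proof -
  have "even (card {d \<in> D. vert d = v \<and> {d, \<alpha> d} \<in> cut Z})" for v
  proof -
    let ?S = "{d \<in> D. vert d = v}"
    have "{d \<in> D. vert d = v \<and> {d, \<alpha> d} \<in> cut Z} = {d \<in> ?S. (fc d \<in> Z) \<noteq> (fc (\<sigma> d) \<in> Z)}"
      using cut_edge fc_sigma by auto
    moreover have "even (card {d \<in> ?S. (fc d \<in> Z) \<noteq> (fc (\<sigma> d) \<in> Z)})"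
      using even_perm_changes[OF _ sigma_bij, of v "\<lambda>d. fc d \<in> Z"] finD by simp
    ultimately show ?thesis by simp
  qed
  then show ?thesis unfolding oddv_def by simp
qed

lemma cut_empty_const:
  assumes Z: "Z \<subseteq> \<Phi>" and c: "cut Z = {}"
  shows "Z = {} \<or> Z = \<Phi>"
proof -
  let ?P = "\<lambda>d. fc d \<in> Z"
  have Pa: "?P (\<alpha> d) = ?P d" if "d \<in> D" for d
    using cut_edge[OF that, of Z] c by auto
  have Ps: "?P (\<sigma> d) = ?P d" if "d \<in> D" for d
    using Pa[OF that] fc_sigma by simp
  have Psn: "?P ((\<sigma> ^^ n) d) = ?P d" if "d \<in> D" for d n
    using that by (induct n) (auto simp: Ps snD)
  have Pv: "?P e = ?P d" if "d \<in> D" "e \<in> D" "vert d = vert e" for d e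
    using strans[OF that] Psn that(1) by blast
  let ?R = "{(x, y). adj D \<alpha> vert x y}"
  have main: "\<forall>e\<in>D. vert e = u \<longrightarrow> ?P e = ?P d" if d: "d \<in> D" and "(vert d, u) \<in> ?R\<^sup>*" for d u
    using that(2)
  proof (induct rule: rtrancl_induct)
    case base then show ?case using Pv d by metis
  next
    case (step u w)
    then obtain x where x: "x \<in> D" "vert x = u" "vert (\<alpha> x) = w" unfolding adj_def by auto
    have "?P x = ?P d" using step(3) x by blast
    then have "?P (\<alpha> x) = ?P d" using Pa x(1) by simp
    then show ?case using Pv[OF aD[OF x(1)]] x by metis
  qed
  have all: "?P e = ?P d" if "d \<in> D" "e \<in> D" for d e
    using main[OF that(1) conn] that by blast
  show ?thesis
  proof (cases "\<exists>d\<in>D. ?P d")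
    case True
    then obtain d where "d \<in> D" "?P d" by blast
    then have "\<forall>e\<in>D. ?P e" using all by blast
    then have "\<Phi> \<subseteq> Z" unfolding faces_def by blast
    then show ?thesis using Z by blast
  next
    case False
    then have "Z \<inter> \<Phi> = {}" unfolding faces_def by blast
    then show ?thesis using Z by blast
  qed
qed

lemma cut_Phi: "cut \<Phi> = {}"
proof -
  have "e \<notin> cut \<Phi>" for e
  proof
    assume "e \<in> cut \<Phi>"
    then obtain d where d: "d \<in> D" "e = {d, \<alpha> d}" using cut_sub E_cases by blast
    then show False using \<open>e \<in> cut \<Phi>\<close> cut_edge[OF d(1)] fc_in d(1) aD by auto
  qed
  then show ?thesis by blast
qed

lemma cut_emptyset: "cut {} = {}" unfolding cut_def by simp

lemma card_E: "2 * card E = card D"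
proof -
  have U: "\<Union>E = D" unfolding E_def using aD by blast
  have "2 * card E = card (\<Union>E)"
  proof (rule card_partition)
    show "finite E" by (rule finE)
    show "finite (\<Union>E)" using U finD by simp
    show "card c = 2" if "c \<in> E" for c using that unfolding E_def using ainv(1) by (auto simp: eq_commute)
    show "c1 \<inter> c2 = {}" if "c1 \<in> E" "c2 \<in> E" "c1 \<noteq> c2" for c1 c2
      using that unfolding E_def apply (auto simp: ainv(2)) by (metis ainv(2))+
  qed
  then show ?thesis using U by simp
qed

end



context pg begin

definition Rel :: "'d set set \<Rightarrow> ('v \<times> 'v) set" where
  "Rel E' = {(vert d, vert (\<alpha> d)) | d. d \<in> D \<and> {d, \<alpha> d} \<in> E'}"

lemma path_odd:
  assumes "(u, v) \<in> (Rel E')\<^sup>*"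
  shows "\<exists>P\<subseteq>E'. oddv P = sd {u} {v}"
  using assms
proof (induct rule: rtrancl_induct)
  case base
  show ?case by (rule exI[of _ "{}"]) (simp add: oddv_empty sd_def)
next
  case (step v w)
  then obtain P where P: "P \<subseteq> E'" "oddv P = sd {u} {v}" by blast
  from step(2) obtain d where d: "d \<in> D" "{d, \<alpha> d} \<in> E'" "v = vert d" "w = vert (\<alpha> d)"
    unfolding Rel_def by blast
  have nl: "v \<noteq> w" using noloop[OF d(1)] d(3,4) by auto
  have "oddv (sd P {{d, \<alpha> d}}) = sd (sd {u} {v}) {v, w}"
    using oddv_hom P(2) oddv_single[OF d(1)] d by simp
  also have "\<dots> = sd {u} {w}" using nl unfolding sd_def by auto
  finally have o: "oddv (sd P {{d, \<alpha> d}}) = sd {u} {w}" .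
  have "sd P {{d, \<alpha> d}} \<subseteq> E'" using P(1) d(2) unfolding sd_def by blast
  then show ?case using o by blast
qed

lemma even_gen_aux:
  assumes conn': "\<And>u v. u \<in> V' \<Longrightarrow> v \<in> V' \<Longrightarrow> (u, v) \<in> (Rel E')\<^sup>*"
    and v0: "v0 \<in> V'" and fS: "finite S" and SV: "S \<subseteq> V'"
  shows "\<exists>P\<subseteq>E'. oddv P = sd S (if odd (card S) then {v0} else {})"
  using fS SV
proof (induct S rule: finite_induct)
  case empty
  show ?case by (rule exI[of _ "{}"]) (simp add: oddv_empty sd_def)
next
  case (insert x S)
  have xV: "x \<in> V'" and SV': "S \<subseteq> V'" using insert(4) by auto
  obtain P where P: "P \<subseteq> E'" "oddv P = sd S (if odd (card S) then {v0} else {})" using insert(3)[OF SV'] by blast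
  obtain Q where Q: "Q \<subseteq> E'" "oddv Q = sd {x} {v0}" using path_odd[OF conn'[OF xV v0]] by blast
  have cs: "card (insert x S) = Suc (card S)" using insert(1,2) by simp
  have "oddv (sd P Q) = sd (sd S (if odd (card S) then {v0} else {})) (sd {x} {v0})"
    using oddv_hom P(2) Q(2) by simp
  also have "\<dots> = sd (insert x S) (if odd (card (insert x S)) then {v0} else {})"
    unfolding cs using insert(2) unfolding sd_def by auto
  finally have o: "oddv (sd P Q) = sd (insert x S) (if odd (card (insert x S)) then {v0} else {})" .
  have "sd P Q \<subseteq> E'" using P(1) Q(1) unfolding sd_def by blast
  then show ?case using o by blast
qed

lemma even_gen:
  assumes conn': "\<And>u v. u \<in> V' \<Longrightarrow> v \<in> V' \<Longrightarrow> (u, v) \<in> (Rel E')\<^sup>*"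
    and fS: "finite S" and SV: "S \<subseteq> V'" and ev: "even (card S)"
  shows "\<exists>P\<subseteq>E'. oddv P = S"
proof (cases "S = {}")
  case True then show ?thesis by (intro exI[of _ "{}"]) (simp add: oddv_empty)
next
  case False
  then obtain v0 where "v0 \<in> S" by blast
  then have "v0 \<in> V'" using SV by blast
  from even_gen_aux[OF conn' this fS SV] ev show ?thesis by (simp add: sd_def)
qed

lemma connR: "u \<in> vert ` D \<Longrightarrow> v \<in> vert ` D \<Longrightarrow> (u, v) \<in> (Rel E)\<^sup>*"
proof -
  have "{(x, y). adj D \<alpha> vert x y} \<subseteq> Rel E"
    unfolding Rel_def adj_def using edge_in_E by blast
  then show "u \<in> vert ` D \<Longrightarrow> v \<in> vert ` D \<Longrightarrow> (u, v) \<in> (Rel E)\<^sup>*"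
    using conn rtrancl_mono by blast
qed

lemma Phi_ne: "\<Phi> \<noteq> {}" using outF by blast

lemma euler_cut:
  assumes Y: "Y \<subseteq> E" and ev: "oddv Y = {}"
  shows "\<exists>Z\<subseteq>\<Phi>. cut Z = Y"
proof -
  let ?V = "vert ` D"
  let ?K = "{Y \<in> Pow E. oddv Y = {}}"
  let ?C = "cut ` Pow \<Phi>"
  have hv: "card (oddv ` Pow E) * card ?K = 2 ^ card E"
    by (rule hom_count[OF finE]) (rule oddv_hom)
  have hc: "card ?C * card {Z\<in>Pow \<Phi>. cut Z = {}} = 2 ^ card \<Phi>"
    by (rule hom_count[OF finPhi]) (rule cut_hom)
  have kc: "{Z\<in>Pow \<Phi>. cut Z = {}} = {{}, \<Phi>}"
  proof (intro set_eqI iffI)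
    fix Z assume "Z \<in> {Z\<in>Pow \<Phi>. cut Z = {}}"
    then have "Z \<subseteq> \<Phi>" "cut Z = {}" by auto
    then show "Z \<in> {{}, \<Phi>}" using cut_empty_const by blast
  next
    fix Z assume "Z \<in> {{}, \<Phi>}"
    then show "Z \<in> {Z\<in>Pow \<Phi>. cut Z = {}}" using cut_Phi cut_emptyset by blast
  qed
  have kc2: "card {Z\<in>Pow \<Phi>. cut Z = {}} = 2" unfolding kc using Phi_ne by simp
  have ne: "?V \<noteq> {}" using outF unfolding faces_def by blast
  then obtain v0 where v0: "v0 \<in> ?V" by blast
  have finV: "finite ?V" using finD by simp
  have evs: "{S. S \<subseteq> ?V \<and> even (card S)} \<subseteq> oddv ` Pow E"
  proof
    fix S assume S: "S \<in> {S. S \<subseteq> ?V \<and> even (card S)}"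
    then have fS: "finite S" and SV: "S \<subseteq> ?V" and eS: "even (card S)"
      using finV finite_subset by auto
    obtain P where "P \<subseteq> E" "oddv P = S" using even_gen[OF connR fS SV eS] by blast
    then show "S \<in> oddv ` Pow E" by blast
  qed
  have finO: "finite (oddv ` Pow E)" using finE by simp
  have "card {S. S \<subseteq> ?V \<and> even (card S)} \<le> card (oddv ` Pow E)"
    by (rule card_mono[OF finO evs])
  then have c1: "2 ^ (card ?V - 1) \<le> card (oddv ` Pow E)"
    unfolding even_subsets_card[OF finV v0] .
  have "card ?K * 2 ^ (card ?V - 1) \<le> card ?K * card (oddv ` Pow E)"
    by (rule mult_le_mono2[OF c1])
  also have "\<dots> = 2 ^ card E" using hv by (simp add: mult.commute)
  finally have K1: "card ?K * 2 ^ (card ?V - 1) \<le> 2 ^ card E" .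
  have C1: "card ?C * 2 = 2 ^ card \<Phi>" using hc unfolding kc2 .
  have eul0: "int (card ?V) - int (card D div 2) + int (card \<Phi>) = 2" by (rule euler)
  have cE: "card D div 2 = card E" using card_E by simp
  have eul: "card \<Phi> + card ?V = card E + 2"
    using eul0 unfolding cE by linarith
  have V1: "card ?V \<ge> 1" using ne finV by (simp add: Suc_le_eq card_gt_0_iff)
  have F1: "card \<Phi> \<ge> 1" using Phi_ne finPhi by (simp add: Suc_le_eq card_gt_0_iff)
  define m where "m = card E + 1 - card ?V"
  have Fm: "card \<Phi> = Suc m" using eul V1 F1 unfolding m_def by linarith
  have Em: "card E = m + (card ?V - 1)" using eul V1 F1 unfolding m_def by linarith
  have Cm: "card ?C = 2 ^ m" using C1 unfolding Fm by simp
  have "card ?K * 2 ^ (card ?V - 1) \<le> 2 ^ m * 2 ^ (card ?V - 1)"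
    using K1 unfolding Em power_add .
  then have Km: "card ?K \<le> 2 ^ m" by simp
  have CK: "?C \<subseteq> ?K"
  proof
    fix c assume "c \<in> ?C"
    then obtain Z where "c = cut Z" by blast
    then show "c \<in> ?K" using cut_sub[of Z] oddv_cut[of Z] by simp
  qed
  have finK: "finite ?K" using finE by simp
  have "?C = ?K" using card_seteq[OF finK CK] Km Cm by simp
  moreover have "Y \<in> ?K" using Y ev by simp
  ultimately have "Y \<in> ?C" by simp
  then show ?thesis by blast
qed

end



lemma modfacts:
  fixes i n :: nat
  assumes "i < n" "3 \<le> n"
  shows "Suc i mod n < n" "(i + n - 1) mod n < n"
    "Suc ((i + n - 1) mod n) mod n = i" "(Suc i mod n + n - 1) mod n = i"
    "Suc i mod n \<noteq> (i + n - 1) mod n" "Suc i mod n \<noteq> i"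
proof -
  have s: "Suc i mod n = (if Suc i = n then 0 else Suc i)" using assms by auto
  have p: "(i + n - 1) mod n = (if i = 0 then n - 1 else i - 1)"
  proof (cases "i = 0")
    case True then show ?thesis using assms by simp
  next
    case False
    then have "i + n - 1 = (i - 1) + n" by simp
    then have "(i + n - 1) mod n = (i - 1) mod n" by simp
    then show ?thesis using False assms by simp
  qed
  show "Suc i mod n < n" using assms by simp
  show "(i + n - 1) mod n < n" using assms by simp
  show "Suc ((i + n - 1) mod n) mod n = i" unfolding p using assms by (cases "i = 0") auto
  show "(Suc i mod n + n - 1) mod n = i"
  proof (cases "Suc i = n")
    case True
    then show ?thesis using assms by simp
  next
    case False
    then have "Suc i mod n = Suc i" using assms by simp
    moreover have "(Suc i + n - 1) mod n = i" using assms by simp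
    ultimately show ?thesis by simp
  qed
  show "Suc i mod n \<noteq> (i + n - 1) mod n" unfolding s p using assms by auto
  show "Suc i mod n \<noteq> i" unfolding s using assms by auto
qed

locale pgc = pg +
  fixes n :: nat and c :: "nat \<Rightarrow> 'b"
  assumes n3: "3 \<le> n" and cbij: "bij_betw c {..<n} Ext"
    and cadj: "\<forall>u\<in>Ext. \<forall>v\<in>Ext. adj D \<alpha> vert u v \<longleftrightarrow>
           (\<exists>i<n. (u = c i \<and> v = c (Suc i mod n)) \<or> (v = c i \<and> u = c (Suc i mod n)))"
begin

definition idx :: "'b \<Rightarrow> nat" where "idx v = inv_into {..<n} c v"
definition nxt :: "'b \<Rightarrow> 'b" where "nxt v = c (Suc (idx v) mod n)"
definition prv :: "'b \<Rightarrow> 'b" where "prv v = c ((idx v + n - 1) mod n)"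

lemma c_in: "i < n \<Longrightarrow> c i \<in> Ext" using cbij unfolding bij_betw_def by auto
lemma c_inj: "i < n \<Longrightarrow> j < n \<Longrightarrow> c i = c j \<Longrightarrow> i = j"
  using cbij unfolding bij_betw_def inj_on_def by auto
lemma cimg: "c ` {..<n} = Ext" using cbij by (rule bij_betw_imp_surj_on)
lemma idx: "v \<in> Ext \<Longrightarrow> idx v < n \<and> c (idx v) = v"
proof -
  assume v: "v \<in> Ext"
  then have "v \<in> c ` {..<n}" using cimg by simp
  then show ?thesis unfolding idx_def using inv_into_into[of v c "{..<n}"] f_inv_into_f[of v c "{..<n}"] by simp
qed
lemma idx_c: "i < n \<Longrightarrow> idx (c i) = i"
proof -
  assume i: "i < n"
  have "inj_on c {..<n}" using cbij by (rule bij_betw_imp_inj_on)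
  then show ?thesis unfolding idx_def using inv_into_f_f i by simp
qed

lemma nxt_in: "v \<in> Ext \<Longrightarrow> nxt v \<in> Ext" unfolding nxt_def using c_in n3 by simp
lemma prv_in: "v \<in> Ext \<Longrightarrow> prv v \<in> Ext" unfolding prv_def using c_in n3 by simp
lemma nxt_prv: "v \<in> Ext \<Longrightarrow> nxt (prv v) = v"
proof -
  assume v: "v \<in> Ext"
  have i: "idx v < n" using idx[OF v] by simp
  have "idx (prv v) = (idx v + n - 1) mod n" unfolding prv_def using idx_c modfacts(2)[OF i n3] by simp
  then show ?thesis unfolding nxt_def using modfacts(3)[OF i n3] idx[OF v] by simp
qed
lemma prv_nxt: "v \<in> Ext \<Longrightarrow> prv (nxt v) = v"
proof -
  assume v: "v \<in> Ext"
  have i: "idx v < n" using idx[OF v] by simp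
  have "idx (nxt v) = Suc (idx v) mod n" unfolding nxt_def using idx_c modfacts(1)[OF i n3] by simp
  then show ?thesis unfolding prv_def using modfacts(4)[OF i n3] idx[OF v] by simp
qed
lemma nxt_ne_prv: "v \<in> Ext \<Longrightarrow> nxt v \<noteq> prv v"
proof
  assume v: "v \<in> Ext" and e: "nxt v = prv v"
  have i: "idx v < n" using idx[OF v] by simp
  have "Suc (idx v) mod n = (idx v + n - 1) mod n"
    using e c_inj[OF modfacts(1)[OF i n3] modfacts(2)[OF i n3]] unfolding nxt_def prv_def by blast
  then show False using modfacts(5)[OF i n3] by simp
qed

lemma adj_ext: "u \<in> Ext \<Longrightarrow> v \<in> Ext \<Longrightarrow> adj D \<alpha> vert u v \<Longrightarrow> v = nxt u \<or> v = prv u"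
proof -
  assume u: "u \<in> Ext" and v: "v \<in> Ext" and a: "adj D \<alpha> vert u v"
  then obtain i where i: "i < n" "(u = c i \<and> v = c (Suc i mod n)) \<or> (v = c i \<and> u = c (Suc i mod n))"
    using cadj[rule_format, OF u v] a by blast
  from i(2) show "v = nxt u \<or> v = prv u"
  proof
    assume "u = c i \<and> v = c (Suc i mod n)"
    then show ?thesis unfolding nxt_def using idx_c i(1) by simp
  next
    assume h: "v = c i \<and> u = c (Suc i mod n)"
    then have "idx u = Suc i mod n" using idx_c modfacts(1)[OF i(1) n3] by simp
    then have "prv u = c i" unfolding prv_def using modfacts(4)[OF i(1) n3] by simp
    then show ?thesis using h by simp
  qed
qed

lemma adj_nxt: "v \<in> Ext \<Longrightarrow> adj D \<alpha> vert v (nxt v)"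
proof -
  assume v: "v \<in> Ext"
  have "\<exists>i<n. (v = c i \<and> nxt v = c (Suc i mod n)) \<or> (nxt v = c i \<and> v = c (Suc i mod n))"
    unfolding nxt_def by (rule exI[of _ "idx v"]) (use idx[OF v] in simp)
  then show ?thesis using cadj[rule_format, OF v nxt_in[OF v]] by blast
qed

lemma adj_prv: "v \<in> Ext \<Longrightarrow> adj D \<alpha> vert v (prv v)"
proof -
  assume v: "v \<in> Ext"
  have "\<exists>i<n. (v = c i \<and> prv v = c (Suc i mod n)) \<or> (prv v = c i \<and> v = c (Suc i mod n))"
  proof -
    have i: "idx v < n" using idx[OF v] by simp
    have "v = c (Suc ((idx v + n - 1) mod n) mod n)" using modfacts(3)[OF i n3] idx[OF v] by simp
    then show ?thesis unfolding prv_def using modfacts(2)[OF i n3] by (intro exI[of _ "(idx v + n - 1) mod n"]) simp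
  qed
  then show ?thesis using cadj[rule_format, OF v prv_in[OF v]] by blast
qed

end



context pgc begin

definition od :: "'a \<Rightarrow> bool" where "od d \<longleftrightarrow> d \<in> D \<and> fc d = out"

lemma ext_iff: "v \<in> Ext \<longleftrightarrow> (\<exists>d. od d \<and> vert d = v)"
  unfolding external_def od_def by blast

lemma od_ext1: "od d \<Longrightarrow> vert d \<in> Ext" using ext_iff by blast

lemma od_tau: "od d \<Longrightarrow> od (\<sigma> (\<alpha> d))"
  unfolding od_def using fc_tau sD aD by simp

lemma od_ext2: "od d \<Longrightarrow> vert (\<alpha> d) \<in> Ext"
proof -
  assume d: "od d"
  then have "vert (\<sigma> (\<alpha> d)) \<in> Ext" using od_tau od_ext1 by blast
  moreover have "vert (\<sigma> (\<alpha> d)) = vert (\<alpha> d)" using d unfolding od_def by (simp add: svert aD)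
  ultimately show ?thesis by simp
qed

lemma od_adj: "od d \<Longrightarrow> vert (\<alpha> d) = nxt (vert d) \<or> vert (\<alpha> d) = prv (vert d)"
proof -
  assume d: "od d"
  have "adj D \<alpha> vert (vert d) (vert (\<alpha> d))" unfolding adj_def using d unfolding od_def by blast
  then show ?thesis using adj_ext od_ext1[OF d] od_ext2[OF d] by blast
qed

lemma sigma_nofix:
  assumes x: "x \<in> D" and v: "vert x \<in> Ext"
  shows "\<sigma> x \<noteq> x"
proof
  assume fx: "\<sigma> x = x"
  have pw: "(\<sigma> ^^ m) x = x" for m by (induct m) (simp_all add: fx)
  have all: "y = x" if yy: "y \<in> D" "vert y = vert x" for y
  proof -
    obtain m where "(\<sigma> ^^ m) x = y" using strans[OF x yy(1) yy(2)[symmetric]] by blast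
    then show ?thesis using pw by simp
  qed
  obtain y where y: "y \<in> D" "vert y = vert x" "vert (\<alpha> y) = nxt (vert x)"
    using adj_nxt[OF v] unfolding adj_def by blast
  obtain z where z: "z \<in> D" "vert z = vert x" "vert (\<alpha> z) = prv (vert x)"
    using adj_prv[OF v] unfolding adj_def by blast
  have "y = z" using all[OF y(1,2)] all[OF z(1,2)] by simp
  then show False using y(3) z(3) nxt_ne_prv[OF v] by simp
qed

definition d0 :: 'a where "d0 = (SOME d. od d)"
lemma d0: "od d0"
proof -
  obtain d where "d \<in> D" "out = fc d" using outF unfolding faces_def by blast
  then have "\<exists>d. od d" unfolding od_def by auto
  then show ?thesis unfolding d0_def by (rule someI_ex)
qed

definition F :: "'b \<Rightarrow> 'b" where "F = (if vert (\<alpha> d0) = nxt (vert d0) then nxt else prv)"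
definition G :: "'b \<Rightarrow> 'b" where "G = (if vert (\<alpha> d0) = nxt (vert d0) then prv else nxt)"

lemma FG: assumes v: "v \<in> Ext"
  shows "F v \<in> Ext" "G v \<in> Ext" "G (F v) = v" "F (G v) = v" "F v \<noteq> G v"
    "(F v = nxt v \<and> G v = prv v) \<or> (F v = prv v \<and> G v = nxt v)"
proof -
  have a: "nxt v \<noteq> prv v" "prv v \<noteq> nxt v" using nxt_ne_prv[OF v] by auto
  show "F v \<in> Ext" "G v \<in> Ext" "G (F v) = v" "F (G v) = v" "F v \<noteq> G v"
    "(F v = nxt v \<and> G v = prv v) \<or> (F v = prv v \<and> G v = nxt v)"
    unfolding F_def G_def using v nxt_in prv_in nxt_prv prv_nxt a by auto
qed

lemma F_inj: "u \<in> Ext \<Longrightarrow> v \<in> Ext \<Longrightarrow> F u = F v \<Longrightarrow> u = v"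
proof -
  assume u: "u \<in> Ext" and v: "v \<in> Ext" and e: "F u = F v"
  then have "G (F u) = G (F v)" by simp
  then show "u = v" using FG(3)[OF u] FG(3)[OF v] by simp
qed

lemma od_step:
  assumes d: "od d" and h: "vert (\<alpha> d) = F (vert d)"
  shows "vert (\<alpha> (\<sigma> (\<alpha> d))) = F (vert (\<sigma> (\<alpha> d)))"
proof -
  let ?e = "\<sigma> (\<alpha> d)"
  have dD: "d \<in> D" using d unfolding od_def by simp
  have eD: "?e \<in> D" using dD by (simp add: sD aD)
  have ve: "vert ?e = vert (\<alpha> d)" using dD by (simp add: svert aD)
  have oe: "od ?e" using od_tau[OF d] .
  have xE: "vert (\<alpha> d) \<in> Ext" using od_ext2[OF d] .
  have vdE: "vert d \<in> Ext" using od_ext1[OF d] .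
  have "vert (\<alpha> ?e) = nxt (vert ?e) \<or> vert (\<alpha> ?e) = prv (vert ?e)" using od_adj[OF oe] .
  then have c2: "vert (\<alpha> ?e) = F (vert ?e) \<or> vert (\<alpha> ?e) = G (vert ?e)"
    using FG(6)[OF xE] ve by auto
  show ?thesis
  proof (rule ccontr)
    assume "vert (\<alpha> ?e) \<noteq> F (vert ?e)"
    then have "vert (\<alpha> ?e) = G (vert ?e)" using c2 by simp
    also have "\<dots> = vert d" using ve h FG(3)[OF vdE] by simp
    finally have "vert (\<alpha> ?e) = vert (\<alpha> (\<alpha> d))" by (simp add: ainv(2))
    then have "?e = \<alpha> d" using simple[OF eD aD[OF dD]] ve by simp
    then show False using sigma_nofix[OF aD[OF dD] xE] by simp
  qed
qed

lemma od_F: "od d \<Longrightarrow> vert (\<alpha> d) = F (vert d)"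
proof -
  assume d: "od d"
  have "d \<in> fc d" by (rule fc_self)
  then have "d \<in> fc d0" using d d0 unfolding od_def by simp
  then obtain k where k: "d = (\<tau> ^^ k) d0" unfolding face_of_def orb_def by blast
  have "od ((\<tau> ^^ k) d0) \<and> vert (\<alpha> ((\<tau> ^^ k) d0)) = F (vert ((\<tau> ^^ k) d0))"
  proof (induct k)
    case 0
    have "vert (\<alpha> d0) = F (vert d0)"
      using od_adj[OF d0] unfolding F_def by auto
    then show ?case using d0 by simp
  next
    case (Suc k)
    then show ?case using od_tau od_step by simp
  qed
  then show ?thesis using k by simp
qed

lemma od_not_alpha: "od d \<Longrightarrow> \<not> od (\<alpha> d)"
proof
  assume d: "od d" and a: "od (\<alpha> d)"
  have v: "vert d \<in> Ext" using od_ext1[OF d] .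
  have "vert (\<alpha> (\<alpha> d)) = F (vert (\<alpha> d))" using od_F[OF a] .
  then have "vert d = F (F (vert d))" using od_F[OF d] by (simp add: ainv(2))
  then have "G (vert d) = G (F (F (vert d)))" by simp
  then have "G (vert d) = F (vert d)" using FG(3)[OF FG(1)[OF v]] by simp
  then show False using FG(5)[OF v] by simp
qed

lemma od_unique: "od d \<Longrightarrow> od d' \<Longrightarrow> vert d = vert d' \<Longrightarrow> d = d'"
proof -
  assume a: "od d" "od d'" "vert d = vert d'"
  then have "vert (\<alpha> d) = vert (\<alpha> d')" using od_F[OF a(1)] od_F[OF a(2)] by simp
  then show "d = d'" using simple a unfolding od_def by blast
qed

lemma od_exists: "v \<in> Ext \<Longrightarrow> \<exists>d. od d \<and> vert d = v" using ext_iff by blast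

definition OE :: "'a set set" where "OE = {{d, \<alpha> d} | d. od d}"

lemma OE_sub: "OE \<subseteq> E" unfolding OE_def E_def od_def by blast

lemma OE_closed:
  assumes W: "W \<subseteq> OE" and ev: "oddv W = {}"
  shows "W = {} \<or> W = OE"
proof (cases "W = {}")
  case True then show ?thesis by simp
next
  case False
  then obtain e where "e \<in> W" by blast
  then obtain x0 where x0: "od x0" "{x0, \<alpha> x0} \<in> W" using W unfolding OE_def by blast
  have step: "{\<sigma> (\<alpha> x), \<alpha> (\<sigma> (\<alpha> x))} \<in> W" if x: "od x" "{x, \<alpha> x} \<in> W" for x
  proof -
    let ?t = "\<sigma> (\<alpha> x)"
    have xD: "x \<in> D" using x unfolding od_def by simp
    let ?v = "vert (\<alpha> x)"
    let ?S = "{y \<in> D. vert y = ?v \<and> {y, \<alpha> y} \<in> W}"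
    have evS: "even (card ?S)" using ev unfolding oddv_def by blast
    have ax: "\<alpha> x \<in> ?S" using x aD[OF xD] by (simp add: ainv(2) insert_commute)
    have vt: "vert ?t = ?v" using xD by (simp add: svert aD)
    have ot: "od ?t" using od_tau[OF x(1)] .
    have sub: "?S \<subseteq> {\<alpha> x, ?t}"
    proof
      fix y assume y: "y \<in> ?S"
      then have "{y, \<alpha> y} \<in> OE" using W by blast
      then obtain z where z: "od z" "{y, \<alpha> y} = {z, \<alpha> z}" unfolding OE_def by blast
      then have "y = z \<or> y = \<alpha> z" using edge_eq by simp
      then show "y \<in> {\<alpha> x, ?t}"
      proof
        assume "y = z"
        then have "y = ?t" using od_unique[OF _ ot] z(1) y vt by simp
        then show ?thesis by simp
      next
        assume yz: "y = \<alpha> z"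
        then have "vert (\<alpha> z) = vert (\<alpha> x)" using y by simp
        then have "F (vert z) = F (vert x)" using od_F[OF z(1)] od_F[OF x(1)] by simp
        then have "vert z = vert x" using F_inj od_ext1 z(1) x(1) by blast
        then have "z = x" using simple od_def z(1) x(1) \<open>vert (\<alpha> z) = vert (\<alpha> x)\<close> by blast
        then show ?thesis using yz by simp
      qed
    qed
    show ?thesis
    proof (rule ccontr)
      assume nt: "{?t, \<alpha> ?t} \<notin> W"
      have "?S = {\<alpha> x}"
      proof
        show "?S \<subseteq> {\<alpha> x}" using sub nt by blast
        show "{\<alpha> x} \<subseteq> ?S" using ax by blast
      qed
      then show False using evS by simp
    qed
  qed
  have all: "{(\<tau> ^^ k) x0, \<alpha> ((\<tau> ^^ k) x0)} \<in> W \<and> od ((\<tau> ^^ k) x0)" for k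
  proof (induct k)
    case 0 then show ?case using x0 by simp
  next
    case (Suc k)
    then show ?case using step od_tau by simp
  qed
  have "OE \<subseteq> W"
  proof
    fix e assume "e \<in> OE"
    then obtain y where y: "od y" "e = {y, \<alpha> y}" unfolding OE_def by blast
    have "y \<in> fc y" by (rule fc_self)
    then have "y \<in> fc x0" using y(1) x0(1) unfolding od_def by simp
    then obtain k where "y = (\<tau> ^^ k) x0" unfolding face_of_def orb_def by blast
    then show "e \<in> W" using all y(2) by simp
  qed
  then show ?thesis using W by blast
qed

lemma cut_out: "cut {out} = OE"
proof (intro set_eqI iffI)
  fix e assume e: "e \<in> cut {out}"
  then obtain d where d: "d \<in> D" "e = {d, \<alpha> d}" using cut_sub E_cases by blast
  have "(fc d = out) \<noteq> (fc (\<alpha> d) = out)" using cut_edge[OF d(1), of "{out}"] e d(2) by simp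
  then show "e \<in> OE"
  proof (cases "fc d = out")
    case True
    then show ?thesis using d unfolding OE_def od_def by blast
  next
    case False
    then have "od (\<alpha> d)" using \<open>(fc d = out) \<noteq> (fc (\<alpha> d) = out)\<close> aD[OF d(1)] unfolding od_def by simp
    moreover have "e = {\<alpha> d, \<alpha> (\<alpha> d)}" using d(2) by (simp add: ainv(2) insert_commute)
    ultimately show ?thesis unfolding OE_def by blast
  qed
next
  fix e assume "e \<in> OE"
  then obtain d where d: "od d" "e = {d, \<alpha> d}" unfolding OE_def by blast
  have "\<not> od (\<alpha> d)" using od_not_alpha[OF d(1)] .
  then have "fc (\<alpha> d) \<noteq> out" using d(1) aD unfolding od_def by auto
  then show "e \<in> cut {out}" using cut_edge[of d "{out}"] d unfolding od_def by simp
qed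

lemma Rel_sym: "(u, v) \<in> Rel E' \<Longrightarrow> (v, u) \<in> Rel E'"
proof -
  assume "(u, v) \<in> Rel E'"
  then obtain d where d: "d \<in> D" "{d, \<alpha> d} \<in> E'" "u = vert d" "v = vert (\<alpha> d)" unfolding Rel_def by blast
  have "{\<alpha> d, \<alpha> (\<alpha> d)} \<in> E'" using d(2) by (simp add: ainv(2) insert_commute)
  then show "(v, u) \<in> Rel E'" unfolding Rel_def using d aD by (auto simp: ainv(2))
qed

lemma connOE: "u \<in> Ext \<Longrightarrow> v \<in> Ext \<Longrightarrow> (u, v) \<in> (Rel OE)\<^sup>*"
proof -
  let ?R = "Rel OE"
  have symR: "sym (?R\<^sup>*)" by (rule sym_rtrancl) (auto simp: sym_def intro: Rel_sym)
  have F1: "(v, F v) \<in> ?R" if vE: "v \<in> Ext" for v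
  proof -
    obtain d where d: "od d" "vert d = v" using od_exists[OF vE] by blast
    then have "{d, \<alpha> d} \<in> OE" unfolding OE_def by blast
    then have "(vert d, vert (\<alpha> d)) \<in> ?R" unfolding Rel_def using d(1) unfolding od_def by blast
    then show ?thesis using d od_F[OF d(1)] by simp
  qed
  have N: "(v, nxt v) \<in> ?R\<^sup>*" if v: "v \<in> Ext" for v
  proof (cases "F v = nxt v")
    case True then show ?thesis using F1[OF v] by simp
  next
    case False
    then have "G v = nxt v" using FG(6)[OF v] by auto
    then have "(nxt v, v) \<in> ?R" using F1[OF FG(2)[OF v]] FG(4)[OF v] by simp
    then show ?thesis using symR unfolding sym_def by blast
  qed
  have C: "(c 0, c i) \<in> ?R\<^sup>*" if "i < n" for i
    using that
  proof (induct i)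
    case 0 then show ?case by simp
  next
    case (Suc i)
    then have i: "i < n" by simp
    have "nxt (c i) = c (Suc i)" unfolding nxt_def using idx_c[OF i] Suc(2) by simp
    then have "(c i, c (Suc i)) \<in> ?R\<^sup>*" using N[OF c_in[OF i]] by simp
    then show ?case using Suc(1)[OF i] by (rule rtrancl_trans[rotated])
  qed
  show "u \<in> Ext \<Longrightarrow> v \<in> Ext \<Longrightarrow> (u, v) \<in> ?R\<^sup>*"
  proof -
    assume u: "u \<in> Ext" and v: "v \<in> Ext"
    have "(c 0, c (idx u)) \<in> ?R\<^sup>*" using C idx[OF u] by blast
    then have "(c 0, u) \<in> ?R\<^sup>*" using idx[OF u] by simp
    then have "(u, c 0) \<in> ?R\<^sup>*" using symR unfolding sym_def by blast
    moreover have "(c 0, c (idx v)) \<in> ?R\<^sup>*" using C idx[OF v] by blast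
    moreover have "c (idx v) = v" using idx[OF v] by simp
    ultimately have "(u, c 0) \<in> ?R\<^sup>*" "(c 0, v) \<in> ?R\<^sup>*" by simp_all
    then show ?thesis by (rule rtrancl_trans)
  qed
qed

end



lemma pat_flips:
  fixes g :: "nat \<Rightarrow> bool"
  assumes ek: "even k" and k0: "0 < k" and gk: "g k = g 0"
    and P: "(\<forall>i<k. g i) \<or> (\<forall>i<k. \<not> g i) \<or> (\<forall>i<k. g i \<longleftrightarrow> even i) \<or> (\<forall>i<k. g i \<longleftrightarrow> odd i)"
  shows "\<exists>t. \<forall>i<k. (g i \<noteq> g (Suc i)) = t"
proof -
  have gS: "g (Suc i) = g 0" if "i < k" "\<not> Suc i < k" for i
  proof -
    have "Suc i = k" using that by simp
    then show ?thesis using gk by simp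
  qed
  have oddlast: "odd i" if "i < k" "\<not> Suc i < k" for i
  proof -
    have "Suc i = k" using that by simp
    then have "even (Suc i)" using ek by simp
    then show ?thesis by simp
  qed
  from P show ?thesis
  proof (elim disjE)
    assume h: "\<forall>i<k. g i"
    have "(g i \<noteq> g (Suc i)) = False" if i: "i < k" for i
    proof (cases "Suc i < k")
      case True then show ?thesis using h i by simp
    next
      case False then show ?thesis using h i gS[OF i False] k0 by simp
    qed
    then show ?thesis by blast
  next
    assume h: "\<forall>i<k. \<not> g i"
    have "(g i \<noteq> g (Suc i)) = False" if i: "i < k" for i
    proof (cases "Suc i < k")
      case True then show ?thesis using h i by simp
    next
      case False then show ?thesis using h i gS[OF i False] k0 by simp
    qed
    then show ?thesis by blast
  next
    assume h: "\<forall>i<k. g i \<longleftrightarrow> even i"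
    have "(g i \<noteq> g (Suc i)) = True" if i: "i < k" for i
    proof (cases "Suc i < k")
      case True then show ?thesis using h i by simp
    next
      case False then show ?thesis using h i gS[OF i False] oddlast[OF i False] k0 by simp
    qed
    then show ?thesis by blast
  next
    assume h: "\<forall>i<k. g i \<longleftrightarrow> odd i"
    have "(g i \<noteq> g (Suc i)) = True" if i: "i < k" for i
    proof (cases "Suc i < k")
      case True then show ?thesis using h i by simp
    next
      case False then show ?thesis using h i gS[OF i False] oddlast[OF i False] k0 by simp
    qed
    then show ?thesis by blast
  qed
qed

lemma flips_pat:
  fixes g :: "nat \<Rightarrow> bool"
  assumes F: "\<And>i. (g i \<noteq> g (Suc i)) = t"
  shows "(\<forall>i<k. g i) \<or> (\<forall>i<k. \<not> g i) \<or> (\<forall>i<k. g i \<longleftrightarrow> even i) \<or> (\<forall>i<k. g i \<longleftrightarrow> odd i)"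
proof -
  have G: "g i = (g 0 \<noteq> (t \<and> odd i))" for i
  proof (induct i)
    case 0 then show ?case by simp
  next
    case (Suc i)
    have "g (Suc i) = (g i \<noteq> t)" using F[of i] by blast
    then show ?case unfolding Suc by auto
  qed
  show ?thesis
  proof (cases t)
    case False
    have "g i = g 0" for i using G[of i] False by simp
    then have "\<forall>i. g i = g 0" by blast
    then show ?thesis by (cases "g 0") auto
  next
    case True
    have "g i = (g 0 \<noteq> odd i)" for i using G[of i] True by simp
    then have "\<forall>i. g i = (g 0 \<noteq> odd i)" by blast
    then show ?thesis by (cases "g 0") auto
  qed
qed

context pgc begin

abbreviation "Fi \<equiv> \<Phi> - {out}"
definition flp :: "'a set set \<Rightarrow> 'a \<Rightarrow> bool" where
  "flp B d \<longleftrightarrow> (fc d \<in> B) \<noteq> (fc (\<sigma> d) \<in> B)"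
definition CB :: "'a set set \<Rightarrow> 'b set" where
  "CB B = {b \<in> Inn. black b \<and> (\<exists>d\<in>D. vert d = b \<and> flp B d)}"
definition Cond1 :: "'a set set \<Rightarrow> bool" where
  "Cond1 B \<longleftrightarrow> (\<forall>d\<in>D. \<forall>e\<in>D. vert d = vert e \<and> vert d \<in> Inn \<and> black (vert d) \<longrightarrow> flp B d = flp B e)"
definition Cond2 :: "'a set set \<Rightarrow> bool" where
  "Cond2 B \<longleftrightarrow> (\<forall>d\<in>D. vert d \<in> Ext \<and> black (vert d) \<and> fc d \<noteq> out \<and> fc (\<sigma> d) \<noteq> out \<longrightarrow> \<not> flp B d)"

lemma Inn_iff: "v \<in> Inn \<longleftrightarrow> v \<in> vert ` D \<and> v \<notin> Ext" unfolding internal_def by blast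

lemma ext_in_V: "v \<in> Ext \<Longrightarrow> v \<in> vert ` D" using od_exists unfolding od_def by blast

lemma flp_sn: "flp B ((\<sigma> ^^ i) d) \<longleftrightarrow> (fc ((\<sigma> ^^ i) d) \<in> B) \<noteq> (fc ((\<sigma> ^^ Suc i) d) \<in> B)"
  unfolding flp_def by simp

lemma internal_part:
  assumes b: "b \<in> Inn" "black b"
  shows "(\<forall>d\<in>D. vert d = b \<longrightarrow>
              (\<forall>i<deg D vert b. fc ((\<sigma> ^^ i) d) \<in> B) \<or>
              (\<forall>i<deg D vert b. fc ((\<sigma> ^^ i) d) \<notin> B) \<or>
              (\<forall>i<deg D vert b. fc ((\<sigma> ^^ i) d) \<in> B \<longleftrightarrow> even i) \<or>
              (\<forall>i<deg D vert b. fc ((\<sigma> ^^ i) d) \<in> B \<longleftrightarrow> odd i))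
         \<longleftrightarrow> (\<forall>d\<in>D. \<forall>e\<in>D. vert d = b \<and> vert e = b \<longrightarrow> flp B d = flp B e)"
proof
  assume H: "\<forall>d\<in>D. vert d = b \<longrightarrow>
              (\<forall>i<deg D vert b. fc ((\<sigma> ^^ i) d) \<in> B) \<or>
              (\<forall>i<deg D vert b. fc ((\<sigma> ^^ i) d) \<notin> B) \<or>
              (\<forall>i<deg D vert b. fc ((\<sigma> ^^ i) d) \<in> B \<longleftrightarrow> even i) \<or>
              (\<forall>i<deg D vert b. fc ((\<sigma> ^^ i) d) \<in> B \<longleftrightarrow> odd i)"
  show "\<forall>d\<in>D. \<forall>e\<in>D. vert d = b \<and> vert e = b \<longrightarrow> flp B d = flp B e"
  proof (intro ballI impI)
    fix d e assume d: "d \<in> D" and e: "e \<in> D" and de: "vert d = b \<and> vert e = b"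
    let ?k = "deg D vert (vert d)"
    let ?g = "\<lambda>i. fc ((\<sigma> ^^ i) d) \<in> B"
    have ek: "even ?k" using ISE b de unfolding inner_semi_eulerian_def by auto
    have k0: "0 < ?k" and gk: "?g ?k = ?g 0" using deg_orbit(1,2)[OF d] by auto
    have P: "(\<forall>i<?k. ?g i) \<or> (\<forall>i<?k. \<not> ?g i) \<or> (\<forall>i<?k. ?g i \<longleftrightarrow> even i) \<or> (\<forall>i<?k. ?g i \<longleftrightarrow> odd i)"
      using H d de by auto
    obtain t where t: "\<forall>i<?k. (?g i \<noteq> ?g (Suc i)) = t" using pat_flips[OF ek k0 gk P] by blast
    have fl: "flp B ((\<sigma> ^^ i) d) = t" if "i < ?k" for i using t that unfolding flp_sn by blast
    obtain i where i: "i < ?k" "d = (\<sigma> ^^ i) d" using deg_orbit(3)[OF d d refl] by blast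
    obtain j where j: "j < ?k" "e = (\<sigma> ^^ j) d" using deg_orbit(3)[OF d e] de by auto
    show "flp B d = flp B e" using fl[OF i(1)] fl[OF j(1)] i(2) j(2) by simp
  qed
next
  assume H: "\<forall>d\<in>D. \<forall>e\<in>D. vert d = b \<and> vert e = b \<longrightarrow> flp B d = flp B e"
  show "\<forall>d\<in>D. vert d = b \<longrightarrow>
              (\<forall>i<deg D vert b. fc ((\<sigma> ^^ i) d) \<in> B) \<or>
              (\<forall>i<deg D vert b. fc ((\<sigma> ^^ i) d) \<notin> B) \<or>
              (\<forall>i<deg D vert b. fc ((\<sigma> ^^ i) d) \<in> B \<longleftrightarrow> even i) \<or>
              (\<forall>i<deg D vert b. fc ((\<sigma> ^^ i) d) \<in> B \<longleftrightarrow> odd i)"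
  proof (intro ballI impI)
    fix d assume d: "d \<in> D" and db: "vert d = b"
    let ?g = "\<lambda>i. fc ((\<sigma> ^^ i) d) \<in> B"
    have "(?g i \<noteq> ?g (Suc i)) = flp B d" for i
    proof -
      have "flp B ((\<sigma> ^^ i) d) = flp B d"
        using H snD[OF d] snvert[OF d] d db by blast
      then show ?thesis unfolding flp_sn by simp
    qed
    from flips_pat[of ?g, OF this] show "(\<forall>i<deg D vert b. ?g i) \<or> (\<forall>i<deg D vert b. \<not> ?g i) \<or>
       (\<forall>i<deg D vert b. ?g i \<longleftrightarrow> even i) \<or> (\<forall>i<deg D vert b. ?g i \<longleftrightarrow> odd i)" .
  qed
qed

lemma external_part:
  assumes b: "b \<in> Ext"
  shows "(let I = {fc d | d. d \<in> D \<and> vert d = b} - {out} in I \<subseteq> B \<or> I \<inter> B = {})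
     \<longleftrightarrow> (\<forall>d\<in>D. vert d = b \<and> fc d \<noteq> out \<and> fc (\<sigma> d) \<noteq> out \<longrightarrow> \<not> flp B d)"
proof -
  let ?I = "{fc d | d. d \<in> D \<and> vert d = b} - {out}"
  have "(?I \<subseteq> B \<or> ?I \<inter> B = {}) \<longleftrightarrow> (\<forall>d\<in>D. vert d = b \<and> fc d \<noteq> out \<and> fc (\<sigma> d) \<noteq> out \<longrightarrow> \<not> flp B d)"
  proof
    assume H: "?I \<subseteq> B \<or> ?I \<inter> B = {}"
    show "\<forall>d\<in>D. vert d = b \<and> fc d \<noteq> out \<and> fc (\<sigma> d) \<noteq> out \<longrightarrow> \<not> flp B d"
    proof (intro ballI impI)
      fix d assume d: "d \<in> D" and h: "vert d = b \<and> fc d \<noteq> out \<and> fc (\<sigma> d) \<noteq> out"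
      have "fc d \<in> ?I" using d h by blast
      moreover have "fc (\<sigma> d) \<in> ?I"
      proof -
        have "\<sigma> d \<in> D" "vert (\<sigma> d) = b" using d h sD svert by auto
        then show ?thesis using h by blast
      qed
      ultimately have "(fc d \<in> B) = (fc (\<sigma> d) \<in> B)" using H by blast
      then show "\<not> flp B d" unfolding flp_def by simp
    qed
  next
    assume H: "\<forall>d\<in>D. vert d = b \<and> fc d \<noteq> out \<and> fc (\<sigma> d) \<noteq> out \<longrightarrow> \<not> flp B d"
    obtain d0' where o: "od d0'" "vert d0' = b" using od_exists[OF b] by blast
    have dD: "d0' \<in> D" using o unfolding od_def by simp
    let ?k = "deg D vert (vert d0')"
    let ?g = "\<lambda>i. fc ((\<sigma> ^^ i) d0') \<in> B"
    have nout: "fc ((\<sigma> ^^ i) d0') \<noteq> out" if "0 < i" "i < ?k" for i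
    proof
      assume "fc ((\<sigma> ^^ i) d0') = out"
      then have "od ((\<sigma> ^^ i) d0')" unfolding od_def using snD[OF dD] by simp
      then have "(\<sigma> ^^ i) d0' = (\<sigma> ^^ 0) d0'" using od_unique o(1) snvert[OF dD] by simp
      then have "i = 0" using deg_orbit(4)[OF dD that(2)] deg_orbit(2)[OF dD] by simp
      then show False using that by simp
    qed
    have const: "?g i = ?g 1" if "0 < i" "i < ?k" for i
      using that
    proof (induct i)
      case 0 then show ?case by simp
    next
      case (Suc i)
      show ?case
      proof (cases "i = 0")
        case True then show ?thesis by simp
      next
        case False
        then have i: "0 < i" "i < ?k" using Suc by auto
        have A: "(\<sigma> ^^ i) d0' \<in> D" "vert ((\<sigma> ^^ i) d0') = b" using snD[OF dD] snvert[OF dD] o(2) by auto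
        have B1: "fc ((\<sigma> ^^ i) d0') \<noteq> out" using nout[OF i] .
        have B2: "fc (\<sigma> ((\<sigma> ^^ i) d0')) \<noteq> out" using nout[of "Suc i"] Suc(3) by simp
        have "\<not> flp B ((\<sigma> ^^ i) d0')" using H A B1 B2 by blast
        then have "?g (Suc i) = ?g i" unfolding flp_sn by simp
        then show ?thesis using Suc(1)[OF i] by simp
      qed
    qed
    have inI: "\<exists>i. 0 < i \<and> i < ?k \<and> x = fc ((\<sigma> ^^ i) d0')" if xI: "x \<in> ?I" for x
    proof -
      obtain e where e: "e \<in> D" "vert e = b" "x = fc e" "x \<noteq> out" using xI by blast
      obtain i where i: "i < ?k" "e = (\<sigma> ^^ i) d0'" using deg_orbit(3)[OF dD e(1)] e(2) o(2) by auto
      have "i \<noteq> 0" using i e o(1) unfolding od_def by auto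
      then show ?thesis using i e by auto
    qed
    show "?I \<subseteq> B \<or> ?I \<inter> B = {}"
    proof (cases "?g 1")
      case True
      have "x \<in> B" if xI: "x \<in> ?I" for x
      proof -
        obtain i where i: "0 < i" "i < ?k" "x = fc ((\<sigma> ^^ i) d0')" using inI[OF xI] by blast
        then show ?thesis using const[OF i(1,2)] True by simp
      qed
      then show ?thesis by blast
    next
      case False
      have "x \<notin> B" if xI: "x \<in> ?I" for x
      proof -
        obtain i where i: "0 < i" "i < ?k" "x = fc ((\<sigma> ^^ i) d0')" using inI[OF xI] by blast
        then show ?thesis using const[OF i(1,2)] False by simp
      qed
      then show ?thesis by blast
    qed
  qed
  then show ?thesis by (simp add: Let_def)
qed

end



lemma card_sd_parity:
  assumes "finite A" "finite B"
  shows "even (card (sd A B)) \<longleftrightarrow> (even (card A) \<longleftrightarrow> even (card B))"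
proof -
  let ?S = "A \<union> B"
  have f: "finite ?S" using assms by simp
  have 1: "sd A B = {x\<in>?S. (x \<in> A) \<noteq> (x \<in> B)}" unfolding sd_def by blast
  have 2: "A = {x\<in>?S. x \<in> A}" by blast
  have 3: "B = {x\<in>?S. x \<in> B}" by blast
  have "odd (card {x\<in>?S. (x \<in> A) \<noteq> (x \<in> B)}) \<longleftrightarrow> (odd (card {x\<in>?S. x \<in> A}) \<noteq> odd (card {x\<in>?S. x \<in> B}))"
    by (rule parity_xor[OF f])
  then have "odd (card (sd A B)) \<longleftrightarrow> (odd (card A) \<noteq> odd (card B))"
    by (simp only: 1[symmetric] 2[symmetric] 3[symmetric])
  then show ?thesis by blast
qed

context pgc begin

definition N1 :: "'a set set \<Rightarrow> bool" where
  "N1 B \<longleftrightarrow> (\<forall>b\<in>Inn. black b \<longrightarrow> (\<forall>d\<in>D. \<forall>e\<in>D. vert d = b \<and> vert e = b \<longrightarrow> flp B d = flp B e))"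
definition N2 :: "'a set set \<Rightarrow> bool" where
  "N2 B \<longleftrightarrow> (\<forall>b\<in>Ext. black b \<longrightarrow> (\<forall>d\<in>D. vert d = b \<and> fc d \<noteq> out \<and> fc (\<sigma> d) \<noteq> out \<longrightarrow> \<not> flp B d))"

abbreviation "Nests \<equiv> billiard_nests D \<alpha> \<sigma> vert black out"
abbreviation "Ch \<equiv> inner_black_channels D \<alpha> \<sigma> vert black out"

lemma nest_iff: "B \<in> Nests \<longleftrightarrow> B \<subseteq> Fi \<and> N1 B \<and> N2 B"
proof -
  have a: "(\<forall>b\<in>Inn. black b \<longrightarrow>
           (\<forall>d\<in>D. vert d = b \<longrightarrow>
              (\<forall>i<deg D vert b. fc ((\<sigma> ^^ i) d) \<in> B) \<or>
              (\<forall>i<deg D vert b. fc ((\<sigma> ^^ i) d) \<notin> B) \<or>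
              (\<forall>i<deg D vert b. fc ((\<sigma> ^^ i) d) \<in> B \<longleftrightarrow> even i) \<or>
              (\<forall>i<deg D vert b. fc ((\<sigma> ^^ i) d) \<in> B \<longleftrightarrow> odd i))) \<longleftrightarrow> N1 B"
    unfolding N1_def using internal_part by blast
  have b: "(\<forall>b\<in>Ext. black b \<longrightarrow>
           (let I = {fc d | d. d \<in> D \<and> vert d = b} - {out}
            in I \<subseteq> B \<or> I \<inter> B = {})) \<longleftrightarrow> N2 B"
    unfolding N2_def using external_part by blast
  show ?thesis unfolding billiard_nests_def mem_Collect_eq a b by blast
qed

lemma flp_cut: "d \<in> D \<Longrightarrow> flp B d \<longleftrightarrow> {d, \<alpha> d} \<in> cut B"
  unfolding flp_def using cut_edge fc_sigma by simp

lemma flp_alpha: "flp B (\<alpha> d) \<longleftrightarrow> flp B d"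
  unfolding flp_def using fc_sigma[of d] fc_sigma[of "\<alpha> d"] by (auto simp: ainv(2))

lemma Inn_nout: "d \<in> D \<Longrightarrow> vert d \<in> Inn \<Longrightarrow> fc d \<noteq> out \<and> fc (\<sigma> d) \<noteq> out"
proof -
  assume d: "d \<in> D" "vert d \<in> Inn"
  then have ne: "vert d \<notin> Ext" using Inn_iff by blast
  have "fc d \<noteq> out" using ne d(1) ext_iff unfolding od_def by blast
  moreover have "fc (\<sigma> d) \<noteq> out" using ne sD[OF d(1)] svert[OF d(1)] ext_iff unfolding od_def by metis
  ultimately show ?thesis by simp
qed

lemma colr: "d \<in> D \<Longrightarrow> black (vert d) \<noteq> black (vert (\<alpha> d))"
  using COL unfolding proper_coloring_def by blast

lemma nbr_card: "card {u \<in> C. adj D \<alpha> vert v u} = card {d \<in> D. vert d = v \<and> vert (\<alpha> d) \<in> C}"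
proof -
  have "bij_betw (\<lambda>d. vert (\<alpha> d)) {d \<in> D. vert d = v \<and> vert (\<alpha> d) \<in> C} {u \<in> C. adj D \<alpha> vert v u}"
    unfolding bij_betw_def
  proof
    show "inj_on (\<lambda>d. vert (\<alpha> d)) {d \<in> D. vert d = v \<and> vert (\<alpha> d) \<in> C}"
      by (rule inj_onI) (use simple in auto)
    show "(\<lambda>d. vert (\<alpha> d)) ` {d \<in> D. vert d = v \<and> vert (\<alpha> d) \<in> C} = {u \<in> C. adj D \<alpha> vert v u}"
      unfolding adj_def by blast
  qed
  then show ?thesis by (simp add: bij_betw_same_card)
qed

lemma CB_iff:
  assumes N: "N1 B" and b: "b \<in> Inn" "black b" and d: "d \<in> D" "vert d = b"
  shows "b \<in> CB B \<longleftrightarrow> flp B d"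
  using N b d unfolding N1_def CB_def by blast

lemma nest_channel:
  assumes B: "B \<in> Nests"
  shows "CB B \<in> Ch"
proof -
  have BF: "B \<subseteq> Fi" and n1: "N1 B" and n2: "N2 B" using B nest_iff by auto
  have sub: "CB B \<subseteq> {v \<in> Inn. black v}" unfolding CB_def by blast
  have "even (card {u \<in> CB B. adj D \<alpha> vert v u})" if v: "v \<in> Inn" for v
  proof (cases "black v")
    case True
    have h: "{u \<in> CB B. adj D \<alpha> vert v u} = {}"
    proof -
      have "\<not> adj D \<alpha> vert v u" if "u \<in> CB B" for u
        using that True colr sub unfolding adj_def by fastforce
      then show ?thesis by blast
    qed
    show ?thesis unfolding h by simp
  next
    case False
    have eq: "{d \<in> D. vert d = v \<and> vert (\<alpha> d) \<in> CB B} = {d \<in> D. vert d = v \<and> {d, \<alpha> d} \<in> cut B}"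
    proof -
      have "vert (\<alpha> d) \<in> CB B \<longleftrightarrow> {d, \<alpha> d} \<in> cut B" if d: "d \<in> D" "vert d = v" for d
      proof -
        have ad: "\<alpha> d \<in> D" using aD d(1) .
        have bl: "black (vert (\<alpha> d))" using colr[OF d(1)] False d(2) by simp
        have fl: "{d, \<alpha> d} \<in> cut B \<longleftrightarrow> flp B (\<alpha> d)" using flp_cut[OF d(1)] flp_alpha by simp
        show ?thesis
        proof (cases "vert (\<alpha> d) \<in> Ext")
          case True
          have nd: "fc d \<noteq> out \<and> fc (\<sigma> d) \<noteq> out" using Inn_nout d v by simp
          have "fc (\<alpha> d) \<noteq> out" using nd fc_sigma by simp
          moreover have "fc (\<sigma> (\<alpha> d)) \<noteq> out" using nd fc_sigma[of "\<alpha> d"] by (simp add: ainv(2))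
          ultimately have "\<not> flp B (\<alpha> d)" using n2 True bl ad unfolding N2_def by blast
          moreover have "vert (\<alpha> d) \<notin> CB B" using True sub Inn_iff by blast
          ultimately show ?thesis using fl by simp
        next
          case False
          then have "vert (\<alpha> d) \<in> Inn" using Inn_iff ad by blast
          then show ?thesis using CB_iff[OF n1 _ bl ad refl] fl by simp
        qed
      qed
      then show ?thesis by blast
    qed
    have "v \<notin> oddv (cut B)" using oddv_cut by simp
    then have "even (card {d \<in> D. vert d = v \<and> {d, \<alpha> d} \<in> cut B})" unfolding oddv_def by simp
    then show ?thesis using nbr_card eq by simp
  qed
  then show ?thesis using sub unfolding inner_black_channels_def by blast
qed

lemma Fi_ne: "Fi \<noteq> {}"
proof -
  have "fc (\<alpha> d0) \<in> \<Phi>" using d0 aD fc_in unfolding od_def by simp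
  moreover have "fc (\<alpha> d0) \<noteq> out" using od_not_alpha[OF d0] d0 aD unfolding od_def by auto
  ultimately show ?thesis by blast
qed

lemma compl_nest:
  assumes B: "B \<in> Nests"
  shows "Fi - B \<in> Nests" "CB (Fi - B) = CB B"
proof -
  have BF: "B \<subseteq> Fi" and n1: "N1 B" and n2: "N2 B" using B nest_iff by auto
  have fl: "flp (Fi - B) d = flp B d" if fd: "d \<in> D" "fc d \<noteq> out" "fc (\<sigma> d) \<noteq> out" for d
  proof -
    have "fc d \<in> Fi" using fc_in[OF fd(1)] fd(2) by blast
    moreover have "fc (\<sigma> d) \<in> Fi" using fc_in[OF sD[OF fd(1)]] fd(3) by blast
    ultimately show ?thesis unfolding flp_def by blast
  qed
  have n1': "N1 (Fi - B)"
    unfolding N1_def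
  proof (intro ballI impI allI)
    fix b d e assume b: "b \<in> Inn" "black b" and d: "d \<in> D" and e: "e \<in> D" and de: "vert d = b \<and> vert e = b"
    have i1: "fc d \<noteq> out" "fc (\<sigma> d) \<noteq> out" using Inn_nout[OF d] b de by auto
    have i2: "fc e \<noteq> out" "fc (\<sigma> e) \<noteq> out" using Inn_nout[OF e] b de by auto
    have "flp (Fi - B) d = flp B d" using fl[OF d i1] .
    moreover have "flp (Fi - B) e = flp B e" using fl[OF e i2] .
    moreover have "flp B d = flp B e" using n1[unfolded N1_def, rule_format, OF b d e de] .
    ultimately show "flp (Fi - B) d = flp (Fi - B) e" by simp
  qed
  have n2': "N2 (Fi - B)"
    unfolding N2_def
  proof (intro ballI impI allI)
    fix b d assume b: "b \<in> Ext" "black b" and d: "d \<in> D" and h: "vert d = b \<and> fc d \<noteq> out \<and> fc (\<sigma> d) \<noteq> out"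
    have "\<not> flp B d" using n2[unfolded N2_def, rule_format, OF b d h] .
    moreover have "fc d \<noteq> out" "fc (\<sigma> d) \<noteq> out" using h by auto
    ultimately show "\<not> flp (Fi - B) d" using fl[OF d] by blast
  qed
  have BF': "Fi - B \<subseteq> Fi" by blast
  show "Fi - B \<in> Nests" using BF' n1' n2' nest_iff by blast
  have "b \<in> CB (Fi - B) \<longleftrightarrow> b \<in> CB B" for b
  proof -
    have "flp (Fi - B) d = flp B d" if dd: "d \<in> D" "vert d = b" "b \<in> Inn" for d
    proof -
      have "fc d \<noteq> out" "fc (\<sigma> d) \<noteq> out" using Inn_nout[OF dd(1)] dd(2,3) by auto
      then show ?thesis using fl[OF dd(1)] by blast
    qed
    then show ?thesis unfolding CB_def by blast
  qed
  then show "CB (Fi - B) = CB B" by blast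
qed

lemma handshake: "Y \<subseteq> E \<Longrightarrow> even (card (oddv Y))"
proof -
  assume YE: "Y \<subseteq> E"
  have "finite Y" using YE finE finite_subset by blast
  then show ?thesis using YE
  proof (induct Y rule: finite_induct)
    case empty then show ?case by (simp add: oddv_empty)
  next
    case (insert e Y)
    obtain d where d: "d \<in> D" "e = {d, \<alpha> d}" using insert(4) E_cases by blast
    have ins: "insert e Y = sd Y {e}" using insert(2) unfolding sd_def by blast
    have o1: "oddv (insert e Y) = sd (oddv Y) (oddv {e})" unfolding ins by (rule oddv_hom)
    have o: "oddv (insert e Y) = sd (oddv Y) {vert d, vert (\<alpha> d)}"
      using o1 oddv_single[OF d(1)] d(2) by simp
    have f1: "finite (oddv Y)" using oddv_sub finD finite_subset by blast
    have c2: "card {vert d, vert (\<alpha> d)} = 2" using noloop[OF d(1)] by auto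
    have "even (card (oddv Y))" using insert by simp
    then show ?case unfolding o using card_sd_parity[OF f1, of "{vert d, vert (\<alpha> d)}"] c2 by simp
  qed
qed

lemma OE_ends: "{d, \<alpha> d} \<in> OE \<Longrightarrow> od d \<or> od (\<alpha> d)"
  unfolding OE_def using edge_eq by (auto simp: ainv(2))

lemma od_vert_ext: "od d \<Longrightarrow> vert d \<in> Ext \<and> vert (\<alpha> d) \<in> Ext"
  using od_ext1 od_ext2 by simp

lemma channel_nest:
  assumes C: "C \<in> Ch"
  shows "\<exists>B. B \<in> Nests \<and> CB B = C"
proof -
  have Csub: "C \<subseteq> {v \<in> Inn. black v}" and Cev: "\<And>v. v \<in> Inn \<Longrightarrow> even (card {u \<in> C. adj D \<alpha> vert v u})"
    using C unfolding inner_black_channels_def by auto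
  define X where "X = {{d, \<alpha> d} | d. d \<in> D \<and> vert d \<in> C}"
  have XE: "X \<subseteq> E" unfolding X_def E_def by blast
  have Xm: "{d, \<alpha> d} \<in> X \<longleftrightarrow> vert d \<in> C \<or> vert (\<alpha> d) \<in> C" if d: "d \<in> D" for d
  proof
    assume "{d, \<alpha> d} \<in> X"
    then obtain y where y: "y \<in> D" "vert y \<in> C" "{d, \<alpha> d} = {y, \<alpha> y}" unfolding X_def by blast
    then have "d = y \<or> d = \<alpha> y" using edge_eq by simp
    then show "vert d \<in> C \<or> vert (\<alpha> d) \<in> C" using y by (auto simp: ainv(2))
  next
    assume "vert d \<in> C \<or> vert (\<alpha> d) \<in> C"
    then show "{d, \<alpha> d} \<in> X"
    proof
      assume "vert d \<in> C" then show ?thesis unfolding X_def using d by blast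
    next
      assume h: "vert (\<alpha> d) \<in> C"
      have "{d, \<alpha> d} = {\<alpha> d, \<alpha> (\<alpha> d)}" by (simp add: ainv(2) insert_commute)
      then show ?thesis unfolding X_def using h aD[OF d] by blast
    qed
  qed
  have oX: "oddv X \<subseteq> Ext"
  proof
    fix v assume v: "v \<in> oddv X"
    show "v \<in> Ext"
    proof (rule ccontr)
      assume ne: "v \<notin> Ext"
      have vI: "v \<in> Inn" using oddv_sub v ne Inn_iff by blast
      let ?S = "{d \<in> D. vert d = v \<and> {d, \<alpha> d} \<in> X}"
      have oS: "odd (card ?S)" using v unfolding oddv_def by simp
      show False
      proof (cases "v \<in> C")
        case True
        have "d \<in> ?S \<longleftrightarrow> d \<in> {d \<in> D. vert d = v}" for d
          using Xm[of d] True by auto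
        then have "?S = {d \<in> D. vert d = v}" by (rule set_eqI)
        moreover have "even (deg D vert v)" using ISE vI Csub True unfolding inner_semi_eulerian_def by blast
        ultimately show False using oS unfolding deg_def by simp
      next
        case False
        show False
        proof (cases "black v")
          case True
          have hS: "?S = {}"
          proof -
            have "vert (\<alpha> d) \<notin> C" if "d \<in> D" "vert d = v" for d
              using colr[OF that(1)] that(2) True Csub by auto
            then have "d \<notin> ?S" for d using Xm[of d] False by auto
            then show ?thesis by blast
          qed
          show False using oS unfolding hS by simp
        next
          case wh: False
          have "d \<in> ?S \<longleftrightarrow> d \<in> {d \<in> D. vert d = v \<and> vert (\<alpha> d) \<in> C}" for d
            using Xm[of d] False by auto
          then have "?S = {d \<in> D. vert d = v \<and> vert (\<alpha> d) \<in> C}" by (rule set_eqI)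
          then show False using oS nbr_card Cev[OF vI] by simp
        qed
      qed
    qed
  qed
  have fX: "finite (oddv X)" using oddv_sub finD finite_subset by blast
  obtain P where P: "P \<subseteq> OE" "oddv P = oddv X"
    using even_gen[OF connOE fX oX handshake[OF XE]] by blast
  define Y where "Y = sd X P"
  have YE: "Y \<subseteq> E" unfolding Y_def sd_def using XE P(1) OE_sub by blast
  have oY0: "oddv Y = sd (oddv X) (oddv P)" unfolding Y_def by (rule oddv_hom)
  have oY: "oddv Y = {}" using oY0 P(2) unfolding sd_def by simp
  obtain Z where Z: "Z \<subseteq> \<Phi>" "cut Z = Y" using euler_cut[OF YE oY] by blast
  define B where "B = (if out \<in> Z then \<Phi> - Z else Z)"
  have BF: "B \<subseteq> Fi" unfolding B_def using Z(1) by auto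
  have cB: "cut B = Y"
  proof (cases "out \<in> Z")
    case True
    have "\<Phi> - Z = sd \<Phi> Z" unfolding sd_def using Z(1) by blast
    then have "cut B = sd (cut \<Phi>) (cut Z)" unfolding B_def using True cut_hom by simp
    then show ?thesis using cut_Phi Z(2) unfolding sd_def by simp
  next
    case False then show ?thesis unfolding B_def using Z(2) by simp
  qed
  have notP: "{d, \<alpha> d} \<notin> P" if "d \<in> D" "fc d \<noteq> out" "fc (\<alpha> d) \<noteq> out" for d
  proof
    assume "{d, \<alpha> d} \<in> P"
    then have "od d \<or> od (\<alpha> d)" using OE_ends P(1) by blast
    then show False using that unfolding od_def by auto
  qed
  have flX: "flp B d \<longleftrightarrow> {d, \<alpha> d} \<in> X" if d: "d \<in> D" "fc d \<noteq> out" "fc (\<alpha> d) \<noteq> out" for d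
    using flp_cut[OF d(1)] cB notP[OF d] unfolding Y_def sd_def by blast
  have wC: "vert (\<alpha> d) \<notin> C" if "d \<in> D" "black (vert d)" for d
    using colr[OF that(1)] that(2) Csub by auto
  have flI: "flp B d \<longleftrightarrow> vert d \<in> C" if d: "d \<in> D" "vert d \<in> Inn" "black (vert d)" for d
  proof -
    have "fc d \<noteq> out" "fc (\<alpha> d) \<noteq> out" using Inn_nout[OF d(1,2)] fc_sigma by auto
    then show ?thesis using flX[OF d(1)] Xm[OF d(1)] wC[OF d(1,3)] by simp
  qed
  have n1: "N1 B" unfolding N1_def
  proof (intro ballI impI allI)
    fix b d e assume b: "b \<in> Inn" "black b" and d: "d \<in> D" and e: "e \<in> D" and de: "vert d = b \<and> vert e = b"
    have "flp B d \<longleftrightarrow> b \<in> C" using flI[OF d] b de by simp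
    moreover have "flp B e \<longleftrightarrow> b \<in> C" using flI[OF e] b de by simp
    ultimately show "flp B d = flp B e" by simp
  qed
  have n2: "N2 B" unfolding N2_def
  proof (intro ballI impI allI)
    fix b d assume b: "b \<in> Ext" "black b" and d: "d \<in> D" and h: "vert d = b \<and> fc d \<noteq> out \<and> fc (\<sigma> d) \<noteq> out"
    have "fc (\<alpha> d) \<noteq> out" using h fc_sigma by simp
    then have "flp B d \<longleftrightarrow> {d, \<alpha> d} \<in> X" using flX d h by simp
    moreover have "vert d \<notin> C" using h b Csub Inn_iff by blast
    moreover have "vert (\<alpha> d) \<notin> C" using wC[OF d] h b by simp
    ultimately show "\<not> flp B d" using Xm[OF d] by simp
  qed
  have "B \<in> Nests" using BF n1 n2 nest_iff by blast
  moreover have "CB B = C"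
  proof
    show "CB B \<subseteq> C"
    proof
      fix b assume "b \<in> CB B"
      then obtain d where d: "b \<in> Inn" "black b" "d \<in> D" "vert d = b" "flp B d" unfolding CB_def by blast
      then show "b \<in> C" using flI[OF d(3)] by simp
    qed
    show "C \<subseteq> CB B"
    proof
      fix b assume b: "b \<in> C"
      then have bI: "b \<in> Inn" "black b" using Csub by auto
      have "b \<in> vert ` D" using bI(1) unfolding internal_def by blast
      then obtain d where d: "d \<in> D" "vert d = b" by blast
      then have "flp B d" using flI[OF d(1)] bI b by simp
      then show "b \<in> CB B" unfolding CB_def using bI d by blast
    qed
  qed
  ultimately show ?thesis by blast
qed

lemma nest_unique:
  assumes B1: "B1 \<in> Nests" and B2: "B2 \<in> Nests" and eq: "CB B1 = CB B2"
  shows "B2 = B1 \<or> B2 = Fi - B1"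
proof -
  have F1: "B1 \<subseteq> Fi" and a1: "N1 B1" and b1: "N2 B1" using B1 nest_iff by auto
  have F2: "B2 \<subseteq> Fi" and a2: "N1 B2" and b2: "N2 B2" using B2 nest_iff by auto
  define Z where "Z = sd B1 B2"
  have ZF: "Z \<subseteq> Fi" unfolding Z_def sd_def using F1 F2 by blast
  have cZ: "cut Z = sd (cut B1) (cut B2)" unfolding Z_def by (rule cut_hom)
  have same: "flp B1 d = flp B2 d" if d: "d \<in> D" "black (vert d)" "fc d \<noteq> out" "fc (\<alpha> d) \<noteq> out" for d
  proof (cases "vert d \<in> Ext")
    case True
    have "fc (\<sigma> d) \<noteq> out" using d(4) fc_sigma by simp
    then have h: "vert d = vert d \<and> fc d \<noteq> out \<and> fc (\<sigma> d) \<noteq> out" using d(3) by simp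
    have "\<not> flp B1 d" using b1[unfolded N2_def, rule_format, OF True d(2) d(1) h] .
    moreover have "\<not> flp B2 d" using b2[unfolded N2_def, rule_format, OF True d(2) d(1) h] .
    ultimately show ?thesis by simp
  next
    case False
    then have "vert d \<in> Inn" using Inn_iff d(1) by blast
    then show ?thesis using CB_iff[OF a1 _ d(2) d(1) refl] CB_iff[OF a2 _ d(2) d(1) refl] eq by simp
  qed
  have sub: "cut Z \<subseteq> OE"
  proof
    fix e assume e: "e \<in> cut Z"
    obtain d where d: "d \<in> D" "e = {d, \<alpha> d}" using e cut_sub E_cases by blast
    show "e \<in> OE"
    proof (rule ccontr)
      assume ne: "e \<notin> OE"
      have "\<not> od d" using ne d unfolding OE_def by blast
      moreover have "\<not> od (\<alpha> d)"
      proof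
        assume "od (\<alpha> d)"
        then have "{\<alpha> d, \<alpha> (\<alpha> d)} \<in> OE" unfolding OE_def by blast
        then show False using ne d(2) by (simp add: ainv(2) insert_commute)
      qed
      ultimately have nd: "fc d \<noteq> out" "fc (\<alpha> d) \<noteq> out" using d(1) aD unfolding od_def by auto
      have "flp B1 d = flp B2 d"
      proof (cases "black (vert d)")
        case True then show ?thesis using same d(1) nd by blast
      next
        case False
        then have "black (vert (\<alpha> d))" using colr[OF d(1)] by simp
        moreover have "fc (\<alpha> (\<alpha> d)) \<noteq> out" using nd by (simp add: ainv(2))
        ultimately have "flp B1 (\<alpha> d) = flp B2 (\<alpha> d)" using same aD[OF d(1)] nd by blast
        then show ?thesis using flp_alpha by simp
      qed
      then have "{d, \<alpha> d} \<notin> sd (cut B1) (cut B2)" using flp_cut[OF d(1)] unfolding sd_def by blast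
      then show False using e d(2) cZ by simp
    qed
  qed
  have "cut Z = {} \<or> cut Z = OE" using OE_closed[OF sub oddv_cut] .
  then show ?thesis
  proof
    assume "cut Z = {}"
    then have "Z = {} \<or> Z = \<Phi>" using cut_empty_const ZF by blast
    then have "Z = {}" using ZF outF by blast
    then show ?thesis unfolding Z_def sd_def by blast
  next
    assume cO: "cut Z = OE"
    have "cut (sd Z {out}) = {}" using cut_hom[of Z "{out}"] cO cut_out unfolding sd_def by simp
    moreover have "sd Z {out} \<subseteq> \<Phi>" using ZF outF unfolding sd_def by blast
    ultimately have "sd Z {out} = {} \<or> sd Z {out} = \<Phi>" using cut_empty_const by blast
    moreover have "out \<in> sd Z {out}" using ZF unfolding sd_def by blast
    ultimately have "sd Z {out} = \<Phi>" by blast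
    then have "Z = Fi" using ZF unfolding sd_def by blast
    then show ?thesis using F1 F2 unfolding Z_def sd_def by blast
  qed
qed

lemma fiber_card:
  assumes C: "C \<in> Ch"
  shows "card {B \<in> Nests. CB B = C} = 2"
proof -
  obtain B where B: "B \<in> Nests" "CB B = C" using channel_nest[OF C] by blast
  have "{B' \<in> Nests. CB B' = C} = {B, Fi - B}"
  proof
    show "{B' \<in> Nests. CB B' = C} \<subseteq> {B, Fi - B}" using nest_unique[OF B(1)] B(2) by blast
    show "{B, Fi - B} \<subseteq> {B' \<in> Nests. CB B' = C}" using B compl_nest[OF B(1)] by auto
  qed
  moreover have "B \<noteq> Fi - B" using Fi_ne by blast
  ultimately show ?thesis by simp
qed

theorem main: "card Nests = 2 * card Ch"
proof -
  have finCh: "finite Ch"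
  proof (rule finite_subset)
    show "Ch \<subseteq> Pow (vert ` D)" unfolding inner_black_channels_def internal_def by blast
    show "finite (Pow (vert ` D))" using finD by simp
  qed
  have U: "Nests = (\<Union>C\<in>Ch. {B \<in> Nests. CB B = C})" using nest_channel by blast
  have finN: "finite Nests"
  proof (rule finite_subset)
    show "Nests \<subseteq> Pow \<Phi>" using nest_iff by blast
    show "finite (Pow \<Phi>)" using finPhi by simp
  qed
  have "card Nests = (\<Sum>C\<in>Ch. card {B \<in> Nests. CB B = C})"
    by (subst U, rule card_UN_disjoint) (use finCh finN in auto)
  also have "\<dots> = (\<Sum>C\<in>Ch. 2)" by (rule sum.cong) (simp_all add: fiber_card)
  finally show ?thesis by simp
qed

end


theorem theorem4p5:
  fixes D :: "'d set" and \<alpha> \<sigma> :: "'d \<Rightarrow> 'd" and vert :: "'d \<Rightarrow> 'v"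
    and black :: "'v \<Rightarrow> bool" and out :: "'d set"
  assumes "plane_graph D \<alpha> \<sigma> vert out"
    and "proper_coloring D \<alpha> vert black"
    and "inner_semi_eulerian D \<alpha> \<sigma> vert black out"
    and "outer_is_cycle D \<alpha> \<sigma> vert out"
  shows "card (billiard_nests D \<alpha> \<sigma> vert black out)
           = 2 * card (inner_black_channels D \<alpha> \<sigma> vert black out)"
proof -
  from assms(4) obtain n c where h: "3 \<le> n" "bij_betw c {..<n} (external D \<alpha> \<sigma> vert out)"
    "\<forall>u\<in>external D \<alpha> \<sigma> vert out. \<forall>v\<in>external D \<alpha> \<sigma> vert out.
           adj D \<alpha> vert u v \<longleftrightarrow>
           (\<exists>i<n. (u = c i \<and> v = c (Suc i mod n)) \<or> (v = c i \<and> u = c (Suc i mod n)))"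
    unfolding outer_is_cycle_def apply (elim exE conjE) by (rule that)
  interpret P: pgc D \<alpha> \<sigma> vert black out n c
    by (rule pgc.intro, rule pg.intro, (rule assms)+, rule pgc_axioms.intro, (rule h)+)
  show ?thesis by (rule P.main)
qed

end
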